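(* Let $k,\ell\in\mathbb N$ with $\ell\le k$, $G\in\mathscr S^{(k)}$, $H\in\mathscr S^{(\ell)}$, and let $\eta$ be a configuration with at most polynomial growth. Then for all $N\in\mathbb N$, $$\langle G,\mathscr X^{(k)N}\rangle\,\langle H,\mathscr X^{(\ell)N}\rangle=\sum_{h=0}^{\ell}\frac{1}{N^{(k+\ell)d}}\sum_{\mathbf x\in(\mathbb Z^d)^k}\sum_{\mathbf y\in(\mathbb Z^d)^\ell}G(\tfrac{\mathbf x}{N})H(\tfrac{\mathbf y}{N})\{\eta|(\mathbf x,\mathbf y)\}^{(k+\ell-h)},$$ where $$\{\eta|(\mathbf x,\mathbf y)\}^{(k+\ell-h)}:=\sum_{\substack{\mathcal J\subseteq\{1,\dots,\ell\}\\|\mathcal J|=h}}[\eta]_{\mathbf x\,\widehat{\mathbf y}_{\mathcal J}}\sum_{\substack{i:\mathcal J\to\{1,\dots,k\}\\ \text{one-to-one}}}\prod_{j\in\mathcal J}\mathbf 1_{\{y_j=x_{i_j}\}}.$$ Moreover, for each $h\in\{0,\dots,\ell\}$ there is a function $\{G\otimes H\}^{(k+\ell-h)}\in\mathscr S^{(k+\ell-h)}$ (independent of $\eta$) such that the $h$-th summand equals $N^{-hd}\langle\{G\otimes H\}^{(k+\ell-h)},\mathscr X^{(k+\ell-h)N}\rangle$, i.e. $\langle\{G\otimes H\}^{(k+\ell-h)},\mathscr X^{(k+\ell-h)N}\rangle=N^{-(k+\ell-h)d}\sum_{\mathbf x}\sum_{\mathbf y}G(\tfrac{\mathbf x}{N})H(\tfrac{\mathbf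 y}{N})\{\eta|(\mathbf x,\mathbf y)\}^{(k+\ell-h)}$.
   Context: $\eta\in\mathbb N_0^{\mathbb Z^d}$ with $\eta(x)\le m(1+|x|)^n$ for all $x$ for some $m,n$. For $\mathbf x=(x_1,\dots,x_k)\in(\mathbb Z^d)^k$, $[\eta]_{\mathbf x}:=\eta(x_1)(\eta(x_2)-\mathbf 1_{\{x_2=x_1\}})\cdots(\eta(x_k)-\sum_{j<k}\mathbf 1_{\{x_k=x_j\}})$. $\mathscr S^{(k)}:=\mathscr S(\mathbb R^{kd})$; $\langle G,\mathscr X^{(k)N}\rangle:=N^{-kd}\sum_{\mathbf x\in(\mathbb Z^d)^k}G(\mathbf x/N)[\eta]_{\mathbf x}$. For $\mathbf x\in(\mathbb Z^d)^k$, $\mathbf y=(y_1,\dots,y_\ell)\in(\mathbb Z^d)^\ell$ and $\mathcal J\subseteq\{1,\dots,\ell\}$, $\mathbf x\,\widehat{\mathbf y}_{\mathcal J}\in(\mathbb Z^d)^{k+\ell-|\mathcal J|}$ denotes the concatenation of $\mathbf x$ with the tuple obtained from $\mathbf y$ by deleting the entries $y_j$, $j\in\mathcal J$ (order otherwise preserved); for $h=0$ the only term is $\mathcal J=\emptyset$ with empty product $1$. *)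

theory Defs
  imports "HOL-Analysis.Analysis"
begin

text \<open>Sites of \<open>\<int>^d\<close> are \<open>int^'d\<close> (the dimension d is \<open>CARD('d)\<close>);
  points of \<open>\<real>^d\<close> are \<open>real^'d\<close>. A k-tuple is a list of length k,
  so \<open>(\<int>^d)^k\<close> is \<open>{xs. length xs = k}\<close> and \<open>\<real>^{kd}\<close> is the set of
  lists of \<open>real^'d\<close> of length k.\<close>

definition rvec :: "int^'d \<Rightarrow> real^'d" where
  "rvec z = (\<chi> i. real_of_int (z $ i))"

definition tuples :: "nat \<Rightarrow> 'a list set" where
  "tuples k = {xs. length xs = k}"

definition poly_growth :: "(int^'d \<Rightarrow> nat) \<Rightarrow> bool" where
  "poly_growth \<eta> \<longleftrightarrow> (\<exists>m::real. \<exists>n::nat. \<forall>x. real (\<eta> x) \<le> m * (1 + norm (rvec x)) ^ n)"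

text \<open>Schwartz class on \<open>\<real>^{kd}\<close>: continuous, rapidly decreasing, and every
  first-order partial derivative exists everywhere and is again in the class
  (coinductively: all partial derivatives of all orders exist, are continuous
  and rapidly decreasing).\<close>
coinductive schwartz :: "nat \<Rightarrow> ((real^'d) list \<Rightarrow> real) \<Rightarrow> bool" where
  "\<lbrakk> \<forall>xs\<in>tuples k. \<forall>e>0. \<exists>\<delta>>0. \<forall>ys\<in>tuples k.
        (\<Sum>j<k. norm (ys!j - xs!j)) < \<delta> \<longrightarrow> \<bar>G ys - G xs\<bar> < e;
     \<forall>m::nat. \<exists>C. \<forall>xs\<in>tuples k. (1 + (\<Sum>j<k. norm (xs!j))) ^ m * \<bar>G xs\<bar> \<le> C;
     \<forall>j<k. \<forall>c::'d. \<exists>G'. (\<forall>xs\<in>tuples k.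
        ((\<lambda>t. G (xs[j := xs!j + t *\<^sub>R axis c 1])) has_real_derivative G' xs) (at 0))
        \<and> schwartz k G' \<rbrakk>
   \<Longrightarrow> schwartz k G"

definition falling :: "(int^'d \<Rightarrow> nat) \<Rightarrow> (int^'d) list \<Rightarrow> real" where
  "falling \<eta> xs = (\<Prod>i<length xs. real (\<eta> (xs!i)) - real (card {j. j < i \<and> xs!j = xs!i}))"

definition scale :: "nat \<Rightarrow> (int^'d) list \<Rightarrow> (real^'d) list" where
  "scale N xs = map (\<lambda>z. (1 / real N) *\<^sub>R rvec z) xs"

definition pairing :: "nat \<Rightarrow> ((real^'d) list \<Rightarrow> real) \<Rightarrow> (int^'d \<Rightarrow> nat) \<Rightarrow> nat \<Rightarrow> real" where
  "pairing k G \<eta> N = (1 / real N ^ (k * CARD('d))) *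
     infsum (\<lambda>xs. G (scale N xs) * falling \<eta> xs) (tuples k)"

text \<open>\<open>x \<hat>y_J\<close> (indices of y are 0-based).\<close>
definition concat_del :: "'a list \<Rightarrow> 'a list \<Rightarrow> nat set \<Rightarrow> 'a list" where
  "concat_del xs ys J = xs @ [ys!j. j \<leftarrow> [0..<length ys], j \<notin> J]"

definition brace :: "(int^'d \<Rightarrow> nat) \<Rightarrow> nat \<Rightarrow> (int^'d) list \<Rightarrow> (int^'d) list \<Rightarrow> real" where
  "brace \<eta> h xs ys =
     (\<Sum>J\<in>{J. J \<subseteq> {..<length ys} \<and> card J = h}.
        falling \<eta> (concat_del xs ys J) *
        (\<Sum>i\<in>{i\<in>J \<rightarrow>\<^sub>E {..<length xs}. inj_on i J}.
           \<Prod>j\<in>J. (if ys!j = xs!(i j) then 1 else 0)))"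

definition summand :: "nat \<Rightarrow> nat \<Rightarrow> ((real^'d) list \<Rightarrow> real) \<Rightarrow> ((real^'d) list \<Rightarrow> real)
    \<Rightarrow> (int^'d \<Rightarrow> nat) \<Rightarrow> nat \<Rightarrow> nat \<Rightarrow> real" where
  "summand k l G H \<eta> N h = (1 / real N ^ ((k + l) * CARD('d))) *
     infsum (\<lambda>xs. infsum (\<lambda>ys. G (scale N xs) * H (scale N ys) * brace \<eta> h xs ys) (tuples l))
       (tuples k)"

end

theory Submission
  imports Defs
begin


definition fl :: "nat set \<Rightarrow> nat \<Rightarrow> nat list" where
  "fl J l = filter (\<lambda>j. j \<notin> J) [0..<l]"
definition pos :: "nat set \<Rightarrow> nat \<Rightarrow> nat" where
  "pos J j = card {j'. j' < j \<and> j' \<notin> J}"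

lemma concat_if_map: "concat (map (\<lambda>j. if P j then [f j] else []) xs) = map f (filter P xs)"
  by (induction xs) auto

lemma concat_del_alt: "concat_del xs ys J = xs @ map (\<lambda>j. ys!j) (fl J (length ys))"
  unfolding concat_del_def fl_def by (simp add: concat_if_map)

lemma set_fl: "set (fl J l) = {j. j < l \<and> j \<notin> J}"
  by (auto simp: fl_def)

lemma distinct_fl: "distinct (fl J l)"
  by (simp add: fl_def)

lemma length_fl_card: "length (fl J l) = card {j. j < l \<and> j \<notin> J}"
  by (metis distinct_card distinct_fl set_fl)

lemma pos_len: "pos J l = length (fl J l)"
  unfolding pos_def length_fl_card by simp

lemma fl_Suc: "fl J (Suc l) = fl J l @ (if l \<in> J then [] else [l])"
  by (simp add: fl_def)

lemma map_pos_fl: "map (pos J) (fl J l) = [0..<length (fl J l)]"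
proof (induction l)
  case 0 then show ?case by (simp add: fl_def)
next
  case (Suc l)
  then show ?case by (simp add: fl_Suc pos_len)
qed

lemma fl_nth_pos:
  assumes "j < l" "j \<notin> J"
  shows "pos J j < length (fl J l) \<and> fl J l ! pos J j = j"
proof -
  have "j \<in> set (fl J l)" using assms by (simp add: set_fl)
  then obtain q where q: "q < length (fl J l)" "fl J l ! q = j" by (auto simp: in_set_conv_nth)
  have "map (pos J) (fl J l) ! q = q" using q(1) by (simp add: map_pos_fl)
  then have "pos J j = q" using q by simp
  then show ?thesis using q by simp
qed

lemma pos_fl_nth: "q < length (fl J l) \<Longrightarrow> pos J (fl J l ! q) = q"
  using map_pos_fl[of J l] by (metis diff_zero length_upt nth_map nth_upt add_0)

lemma length_fl: "J \<subseteq> {..<l} \<Longrightarrow> length (fl J l) = l - card J"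
proof -
  assume a: "J \<subseteq> {..<l}"
  have "{j. j < l \<and> j \<notin> J} = {..<l} - J" by auto
  then show ?thesis using a by (simp add: length_fl_card card_Diff_subset finite_subset)
qed

lemma count_list_card: "count_list xs x = card {j. j < length xs \<and> xs!j = x}"
proof (induction xs rule: rev_induct)
  case Nil then show ?case by simp
next
  case (snoc a xs)
  have e: "{j. j < length (xs @ [a]) \<and> (xs @ [a]) ! j = x}
     = {j. j < length xs \<and> xs!j = x} \<union> (if a = x then {length xs} else {})"
    by (auto simp: nth_append less_Suc_eq)
  have f: "finite {j. j < length xs \<and> xs!j = x}" by simp
  have "length xs \<notin> {j. j < length xs \<and> xs!j = x}" by simp
  then show ?case using snoc f by (simp only: e) (simp add: card_insert_disjoint)
qed

lemma falling_snoc: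
  "falling \<eta> (z @ [y]) = falling \<eta> z * (real (\<eta> y) - real (count_list z y))"
proof -
  have "falling \<eta> (z @ [y]) = (\<Prod>i<length z. real (\<eta> ((z@[y])!i)) - real (card {j. j < i \<and> (z@[y])!j = (z@[y])!i}))
       * (real (\<eta> y) - real (card {j. j < length z \<and> (z@[y])!j = y}))"
    by (simp add: falling_def)
  also have "(\<Prod>i<length z. real (\<eta> ((z@[y])!i)) - real (card {j. j < i \<and> (z@[y])!j = (z@[y])!i}))
     = falling \<eta> z"
    unfolding falling_def
  proof (rule prod.cong[OF refl])
    fix i assume i: "i \<in> {..<length z}"
    have "{j. j < i \<and> (z@[y])!j = (z@[y])!i} = {j. j < i \<and> z!j = z!i}"
      using i by (auto simp: nth_append)
    then show "real (\<eta> ((z@[y])!i)) - real (card {j. j < i \<and> (z@[y])!j = (z@[y])!i})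
        = real (\<eta> (z!i)) - real (card {j. j < i \<and> z!j = z!i})" using i by (simp add: nth_append)
  qed
  also have "{j. j < length z \<and> (z@[y])!j = y} = {j. j < length z \<and> z!j = y}"
    by (auto simp: nth_append)
  finally show ?thesis by (simp add: count_list_card)
qed

definition Mt :: "'a list \<Rightarrow> 'a list \<Rightarrow> nat set \<Rightarrow> (nat \<Rightarrow> nat) set" where
  "Mt xs ys J = {i \<in> J \<rightarrow>\<^sub>E {..<length xs}. inj_on i J \<and> (\<forall>j\<in>J. ys!j = xs!(i j))}"

lemma finite_Mt: "finite J \<Longrightarrow> finite (Mt xs ys J)"
  unfolding Mt_def by (rule finite_subset[of _ "J \<rightarrow>\<^sub>E {..<length xs}"]) (auto intro: finite_PiE)

lemma cd_snoc_notin: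
  assumes "J \<subseteq> {..<length ys}"
  shows "concat_del xs (ys @ [y]) J = concat_del xs ys J @ [y]"
proof -
  have "length ys \<notin> J" using assms by auto
  moreover have "map (\<lambda>j. (ys@[y])!j) (fl J (length ys)) = map (\<lambda>j. ys!j) (fl J (length ys))"
    by (rule map_cong[OF refl]) (simp add: set_fl nth_append)
  ultimately show ?thesis by (simp add: concat_del_alt fl_Suc)
qed

lemma cd_snoc_in:
  assumes "J \<subseteq> {..<length ys}"
  shows "concat_del xs (ys @ [y]) (insert (length ys) J) = concat_del xs ys J"
proof -
  have "fl (insert (length ys) J) (length ys) = fl J (length ys)"
    unfolding fl_def by (rule filter_cong) auto
  moreover have "map (\<lambda>j. (ys@[y])!j) (fl J (length ys)) = map (\<lambda>j. ys!j) (fl J (length ys))"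
    by (rule map_cong[OF refl]) (simp add: set_fl nth_append)
  ultimately show ?thesis by (simp add: concat_del_alt fl_Suc)
qed

lemma Mt_snoc_notin:
  assumes "J \<subseteq> {..<length ys}"
  shows "Mt xs (ys @ [y]) J = Mt xs ys J"
  unfolding Mt_def using assms by (auto simp: nth_append subset_iff)

lemma card_Mt_snoc_in:
  assumes J: "J \<subseteq> {..<length ys}"
  shows "card (Mt xs (ys @ [y]) (insert (length ys) J))
     = (\<Sum>i\<in>Mt xs ys J. card {m. m < length xs \<and> m \<notin> i ` J \<and> xs!m = y})"
proof -
  let ?l = "length ys" and ?k = "length xs"
  have lJ: "?l \<notin> J" using J by auto
  have fJ: "finite J" using J finite_subset by blast
  let ?S = "Sigma (Mt xs ys J) (\<lambda>i. {m. m < ?k \<and> m \<notin> i ` J \<and> xs!m = y})"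
  have bij: "bij_betw (\<lambda>(i,m). i(?l := m)) ?S (Mt xs (ys @ [y]) (insert ?l J))"
  proof (rule bij_betw_byWitness[where f' = "\<lambda>i'. (i'(?l := undefined), i' ?l)"])
    show "\<forall>a\<in>?S. (\<lambda>i'. (i'(?l := undefined), i' ?l)) ((\<lambda>(i,m). i(?l := m)) a) = a"
    proof
      fix a assume "a \<in> ?S"
      then obtain i m where a: "a = (i,m)" "i \<in> J \<rightarrow>\<^sub>E {..<?k}" by (auto simp: Mt_def)
      then have "i ?l = undefined" using lJ by (auto simp: PiE_def extensional_def)
      then show "(\<lambda>i'. (i'(?l := undefined), i' ?l)) ((\<lambda>(i,m). i(?l := m)) a) = a"
        using a by (auto simp: fun_upd_idem)
    qed
    show "\<forall>a'\<in>Mt xs (ys @ [y]) (insert ?l J). (\<lambda>(i,m). i(?l := m)) ((\<lambda>i'. (i'(?l := undefined), i' ?l)) a') = a'"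
      by auto
    show "(\<lambda>(i,m). i(?l := m)) ` ?S \<subseteq> Mt xs (ys @ [y]) (insert ?l J)"
    proof
      fix p assume "p \<in> (\<lambda>(i,m). i(?l := m)) ` ?S"
      then obtain i m where p: "p = i(?l := m)" and i: "i \<in> Mt xs ys J" and m: "m < ?k" "m \<notin> i ` J" "xs!m = y"
        by auto
      have inj: "inj_on (i(?l := m)) (insert ?l J)"
      proof -
        have "inj_on (i(?l := m)) J" using i lJ unfolding Mt_def inj_on_def by auto
        moreover have "(i(?l := m)) ?l \<notin> (i(?l := m)) ` (J - {?l})" using m lJ by auto
        ultimately show ?thesis by (simp add: inj_on_insert)
      qed
      show "p \<in> Mt xs (ys @ [y]) (insert ?l J)" unfolding p
        using i m J inj lJ unfolding Mt_def by (auto simp: PiE_def extensional_def nth_append subset_iff)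
    qed
    show "(\<lambda>i'. (i'(?l := undefined), i' ?l)) ` Mt xs (ys @ [y]) (insert ?l J) \<subseteq> ?S"
    proof
      fix p assume "p \<in> (\<lambda>i'. (i'(?l := undefined), i' ?l)) ` Mt xs (ys @ [y]) (insert ?l J)"
      then obtain i' where p: "p = (i'(?l := undefined), i' ?l)" and i': "i' \<in> Mt xs (ys @ [y]) (insert ?l J)"
        by auto
      then have ij: "inj_on i' (insert ?l J)" and pe: "i' \<in> insert ?l J \<rightarrow>\<^sub>E {..<?k}"
        and mt: "\<forall>j\<in>insert ?l J. (ys@[y])!j = xs!(i' j)" by (auto simp: Mt_def)
      have "inj_on (i'(?l := undefined)) J" using ij lJ unfolding inj_on_def by auto
      moreover have "i'(?l := undefined) \<in> J \<rightarrow>\<^sub>E {..<?k}" using pe lJ by (auto simp: PiE_def extensional_def)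
      moreover have "\<forall>j\<in>J. ys!j = xs!((i'(?l := undefined)) j)" using mt lJ J by (auto simp: nth_append subset_iff)
      moreover have "i' ?l \<notin> (i'(?l := undefined)) ` J" using ij lJ by (auto simp: inj_on_def)
      moreover have "i' ?l < ?k" using pe by auto
      moreover have "xs!(i' ?l) = y" using mt by simp
      ultimately show "p \<in> ?S" unfolding p by (auto simp: Mt_def)
    qed
  qed
  then have "card (Mt xs (ys @ [y]) (insert ?l J)) = card ?S" by (simp add: bij_betw_same_card)
  also have "\<dots> = (\<Sum>i\<in>Mt xs ys J. card {m. m < ?k \<and> m \<notin> i ` J \<and> xs!m = y})"
    by (rule card_SigmaI) (auto simp: finite_Mt fJ)
  finally show ?thesis .
qed

lemma count_key:
  assumes J: "J \<subseteq> {..<length ys}" and i: "i \<in> Mt xs ys J"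
  shows "count_list (concat_del xs ys J) y = count_list ys y + card {m. m < length xs \<and> m \<notin> i ` J \<and> xs!m = y}"
proof -
  let ?l = "length ys" and ?k = "length xs"
  have fJ: "finite J" using J finite_subset by blast
  have ij: "inj_on i J" and pe: "i \<in> J \<rightarrow>\<^sub>E {..<?k}" and mt: "\<forall>j\<in>J. ys!j = xs!(i j)"
    using i by (auto simp: Mt_def)
  have c1: "count_list (map (\<lambda>j. ys!j) (fl J ?l)) y = card {j. j < ?l \<and> j \<notin> J \<and> ys!j = y}"
  proof -
    have "count_list (map (\<lambda>j. ys!j) (fl J ?l)) y = length (filter (\<lambda>j. ys!j = y) (fl J ?l))"
      by (simp add: count_list_eq_length_filter filter_map o_def eq_commute)
    also have "\<dots> = card (set (filter (\<lambda>j. ys!j = y) (fl J ?l)))"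
      by (metis distinct_card distinct_filter distinct_fl)
    also have "set (filter (\<lambda>j. ys!j = y) (fl J ?l)) = {j. j < ?l \<and> j \<notin> J \<and> ys!j = y}"
      by (auto simp: set_fl)
    finally show ?thesis .
  qed
  have c2: "count_list xs y = card {m. m < ?k \<and> m \<notin> i ` J \<and> xs!m = y} + card (i ` {j\<in>J. ys!j = y})"
  proof -
    have sub: "i ` {j\<in>J. ys!j = y} \<subseteq> {m. m < ?k \<and> xs!m = y}" using pe mt by auto
    have "{m. m < ?k \<and> m \<notin> i ` J \<and> xs!m = y} = {m. m < ?k \<and> xs!m = y} - i ` {j\<in>J. ys!j = y}"
      using mt by auto
    then have "card {m. m < ?k \<and> m \<notin> i ` J \<and> xs!m = y} = card {m. m < ?k \<and> xs!m = y} - card (i ` {j\<in>J. ys!j = y})"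
      using sub by (simp add: card_Diff_subset finite_subset[OF sub])
    moreover have "card (i ` {j\<in>J. ys!j = y}) \<le> card {m. m < ?k \<and> xs!m = y}"
      using sub by (intro card_mono) auto
    ultimately show ?thesis by (simp add: count_list_card)
  qed
  have c3: "card (i ` {j\<in>J. ys!j = y}) = card {j\<in>J. ys!j = y}"
    by (rule card_image, rule inj_on_subset[OF ij]) auto
  have c4: "count_list ys y = card {j\<in>J. ys!j = y} + card {j. j < ?l \<and> j \<notin> J \<and> ys!j = y}"
  proof -
    have "{j. j < ?l \<and> ys!j = y} = {j\<in>J. ys!j = y} \<union> {j. j < ?l \<and> j \<notin> J \<and> ys!j = y}"
      using J by auto
    then show ?thesis unfolding count_list_card
      by (simp add: card_Un_disjoint fJ) (subst card_Un_disjoint, auto simp: fJ)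
  qed
  show ?thesis using c1 c2 c3 c4 by (simp add: concat_del_alt count_list_append)
qed

lemma main_identity:
  "(\<Sum>J\<in>Pow {..<length ys}. falling \<eta> (concat_del xs ys J) * real (card (Mt xs ys J)))
     = falling \<eta> xs * falling \<eta> ys"
proof (induction ys rule: rev_induct)
  case Nil
  have "Mt xs [] {} = {\<lambda>_. undefined}" by (auto simp: Mt_def)
  then show ?case by (simp add: concat_del_def falling_def)
next
  case (snoc y ys)
  let ?l = "length ys"
  let ?c = "\<lambda>i J. card {m. m < length xs \<and> m \<notin> i ` J \<and> xs!m = y}"
  let ?z = "\<lambda>J. concat_del xs ys J"
  have P: "Pow {..<length (ys @ [y])} = Pow {..<?l} \<union> insert ?l ` Pow {..<?l}"
    by (simp add: lessThan_Suc Pow_insert)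
  have disj: "Pow {..<?l} \<inter> insert ?l ` Pow {..<?l} = {}" by auto
  have inj: "inj_on (insert ?l) (Pow {..<?l})"
    unfolding inj_on_def by (metis PowD insert_ident lessThan_iff less_irrefl subset_iff)
  have "(\<Sum>J\<in>Pow {..<length (ys @ [y])}. falling \<eta> (concat_del xs (ys@[y]) J) * real (card (Mt xs (ys@[y]) J)))
     = (\<Sum>J\<in>Pow {..<?l}. falling \<eta> (concat_del xs (ys@[y]) J) * real (card (Mt xs (ys@[y]) J)))
     + (\<Sum>J\<in>Pow {..<?l}. falling \<eta> (concat_del xs (ys@[y]) (insert ?l J)) * real (card (Mt xs (ys@[y]) (insert ?l J))))"
    unfolding P by (subst sum.union_disjoint) (auto simp: disj sum.reindex[OF inj])
  also have "\<dots> = (\<Sum>J\<in>Pow {..<?l}. (\<Sum>i\<in>Mt xs ys J. falling \<eta> (?z J) * (real (\<eta> y) - real (count_list ys y))))"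
    unfolding sum.distrib[symmetric]
  proof (rule sum.cong[OF refl])
    fix J assume "J \<in> Pow {..<?l}"
    then have J: "J \<subseteq> {..<?l}" by auto
    have "falling \<eta> (concat_del xs (ys@[y]) J) * real (card (Mt xs (ys@[y]) J))
        + falling \<eta> (concat_del xs (ys@[y]) (insert ?l J)) * real (card (Mt xs (ys@[y]) (insert ?l J)))
      = (\<Sum>i\<in>Mt xs ys J. falling \<eta> (?z J) * (real (\<eta> y) - real (count_list (?z J) y)))
        + (\<Sum>i\<in>Mt xs ys J. falling \<eta> (?z J) * real (?c i J))"
      using J by (simp add: cd_snoc_notin cd_snoc_in Mt_snoc_notin card_Mt_snoc_in falling_snoc sum_distrib_left)
    also have "\<dots> = (\<Sum>i\<in>Mt xs ys J. falling \<eta> (?z J) * (real (\<eta> y) - real (count_list ys y)))"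
      unfolding sum.distrib[symmetric]
      by (rule sum.cong[OF refl]) (simp add: count_key[OF J] algebra_simps)
    finally show "falling \<eta> (concat_del xs (ys@[y]) J) * real (card (Mt xs (ys@[y]) J))
        + falling \<eta> (concat_del xs (ys@[y]) (insert ?l J)) * real (card (Mt xs (ys@[y]) (insert ?l J)))
      = (\<Sum>i\<in>Mt xs ys J. falling \<eta> (?z J) * (real (\<eta> y) - real (count_list ys y)))" .
  qed
  also have "\<dots> = (\<Sum>J\<in>Pow {..<?l}. falling \<eta> (?z J) * real (card (Mt xs ys J))) * (real (\<eta> y) - real (count_list ys y))"
    by (simp add: sum_distrib_right sum_distrib_left mult_ac)
  also have "\<dots> = falling \<eta> xs * falling \<eta> (ys @ [y])"
    using snoc by (simp add: falling_snoc)
  finally show ?case .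
qed



definition sel :: "(nat \<Rightarrow> nat) \<Rightarrow> nat \<Rightarrow> 'a list \<Rightarrow> 'a list" where
  "sel \<pi> m v = map (\<lambda>p. v ! \<pi> p) [0..<m]"

lemma length_sel[simp]: "length (sel \<pi> m v) = m" by (simp add: sel_def)
lemma sel_tuples[simp]: "sel \<pi> m v \<in> tuples m" by (simp add: tuples_def)
lemma nth_sel[simp]: "p < m \<Longrightarrow> sel \<pi> m v ! p = v ! \<pi> p" by (simp add: sel_def)

lemma sel_upd_hit:
  assumes "inj_on \<pi> {..<m}" "\<pi> ` {..<m} \<subseteq> {..<length v}" "p < m" "\<pi> p = j"
  shows "sel \<pi> m (v[j := x]) = (sel \<pi> m v)[p := x]"
proof (rule nth_equalityI)
  fix p' assume "p' < length (sel \<pi> m (v[j := x]))"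
  then have p': "p' < m" by simp
  have "\<pi> p' < length v" using assms(2) p' by auto
  moreover have "\<pi> p' = j \<longleftrightarrow> p' = p" using assms p' by (auto simp: inj_on_def)
  ultimately show "sel \<pi> m (v[j := x]) ! p' = (sel \<pi> m v)[p := x] ! p'"
    using p' assms by (auto simp: nth_list_update)
qed simp

lemma sel_upd_miss:
  assumes "\<not> (\<exists>p<m. \<pi> p = j)"
  shows "sel \<pi> m (v[j := x]) = sel \<pi> m v"
proof (rule nth_equalityI)
  fix p' assume "p' < length (sel \<pi> m (v[j := x]))"
  then have p': "p' < m" by simp
  then have "\<pi> p' \<noteq> j" using assms by auto
  then show "sel \<pi> m (v[j := x]) ! p' = sel \<pi> m v ! p'" using p' by (simp add: nth_list_update)
qed simp

lemma sch_cont: "schwartz k G \<Longrightarrow> xs \<in> tuples k \<Longrightarrow> e > 0 \<Longrightarrow>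
   \<exists>\<delta>>0. \<forall>ys\<in>tuples k. (\<Sum>j<k. norm (ys!j - xs!j)) < \<delta> \<longrightarrow> \<bar>G ys - G xs\<bar> < e"
  by (subst (asm) schwartz.simps) auto

lemma sch_decay: "schwartz k G \<Longrightarrow> \<exists>C. \<forall>xs\<in>tuples k. (1 + (\<Sum>j<k. norm (xs!j))) ^ m * \<bar>G xs\<bar> \<le> C"
  by (subst (asm) schwartz.simps) auto

lemma sch_deriv: "schwartz k G \<Longrightarrow> j < k \<Longrightarrow> \<exists>G'. (\<forall>xs\<in>tuples k.
        ((\<lambda>t. G (xs[j := xs!j + t *\<^sub>R axis c 1])) has_real_derivative G' xs) (at 0)) \<and> schwartz k G'"
  by (subst (asm) schwartz.simps) auto

lemma schwartz_zero: "schwartz k (\<lambda>_. 0)"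
proof -
  have "(\<lambda>_. 0::real) = (\<lambda>_. 0) \<Longrightarrow> schwartz k (\<lambda>_. 0::real)"
  proof (coinduction rule: schwartz.coinduct)
    case schwartz
    then show ?case by (auto intro!: exI[of _ "\<lambda>_. 0"])
  qed
  then show ?thesis by simp
qed

definition Dv :: "nat \<Rightarrow> ((real^'d) list \<Rightarrow> real) \<Rightarrow> nat \<Rightarrow> 'd \<Rightarrow> ((real^'d) list \<Rightarrow> real)" where
  "Dv k A p c = (SOME G'. (\<forall>xs\<in>tuples k.
        ((\<lambda>t. A (xs[p := xs!p + t *\<^sub>R axis c 1])) has_real_derivative G' xs) (at 0)) \<and> schwartz k G')"

lemma Dv_prop:
  assumes "schwartz k A" "p < k"
  shows "(\<forall>xs\<in>tuples k. ((\<lambda>t. A (xs[p := xs!p + t *\<^sub>R axis c 1])) has_real_derivative Dv k A p c xs) (at 0))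
    \<and> schwartz k (Dv k A p c)"
  using sch_deriv[OF assms, of c] unfolding Dv_def by (rule someI_ex)

definition dT :: "nat \<Rightarrow> ((real^'d) list \<Rightarrow> real) \<Rightarrow> (nat \<Rightarrow> nat) \<Rightarrow> nat \<Rightarrow> 'd \<Rightarrow> ((real^'d) list \<Rightarrow> real)" where
  "dT k A \<pi> j c = (if \<exists>p<k. \<pi> p = j then Dv k A (THE p. p < k \<and> \<pi> p = j) c else (\<lambda>_. 0))"

lemma dT_schwartz: "schwartz k A \<Longrightarrow> inj_on \<pi> {..<k} \<Longrightarrow> schwartz k (dT k A \<pi> j c)"
proof -
  assume A: "schwartz k A" and inj: "inj_on \<pi> {..<k}"
  show ?thesis
  proof (cases "\<exists>p<k. \<pi> p = j")
    case True
    then obtain p where p: "p < k" "\<pi> p = j" by auto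
    have "(THE p. p < k \<and> \<pi> p = j) = p" using p inj by (auto simp: inj_on_def)
    then show ?thesis using True Dv_prop[OF A p(1)] by (simp add: dT_def)
  next
    case False
    have "dT k A \<pi> j c = (\<lambda>_. 0)" unfolding dT_def by (rule if_not_P[OF False])
    then show ?thesis by (simp add: schwartz_zero)
  qed
qed

lemma dT_deriv:
  assumes A: "schwartz k A" and inj: "inj_on \<pi> {..<k}" and rng: "\<pi> ` {..<k} \<subseteq> {..<n}"
    and v: "v \<in> tuples n" and j: "j < n"
  shows "((\<lambda>t. A (sel \<pi> k (v[j := v!j + t *\<^sub>R axis c 1]))) has_real_derivative dT k A \<pi> j c (sel \<pi> k v)) (at 0)"
proof (cases "\<exists>p<k. \<pi> p = j")
  case True
  then obtain p where p: "p < k" "\<pi> p = j" by auto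
  have th: "(THE p. p < k \<and> \<pi> p = j) = p" using p inj by (auto simp: inj_on_def)
  have lv: "length v = n" using v by (simp add: tuples_def)
  have e: "sel \<pi> k (v[j := v!j + t *\<^sub>R axis c 1]) = (sel \<pi> k v)[p := (sel \<pi> k v)!p + t *\<^sub>R axis c 1]" for t
    using sel_upd_hit[OF inj _ p] rng lv p by auto
  show ?thesis unfolding e using True th Dv_prop[OF A p(1), of c] by (simp add: dT_def)
next
  case False
  have "dT k A \<pi> j c = (\<lambda>_. 0)" unfolding dT_def by (rule if_not_P[OF False])
  then show ?thesis using False by (simp add: sel_upd_miss)
qed

definition dn :: "nat \<Rightarrow> (real^'d) list \<Rightarrow> (real^'d) list \<Rightarrow> real" where
  "dn n w v = (\<Sum>j<n. norm (w!j - v!j))"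

definition nb :: "nat \<Rightarrow> (real^'d) list \<Rightarrow> (real^'d) list filter" where
  "nb n v = (INF \<delta>\<in>{0<..}. principal {w\<in>tuples n. dn n w v < \<delta>})"

lemma eventually_nb: "eventually P (nb n v) \<longleftrightarrow> (\<exists>\<delta>>0. \<forall>w\<in>tuples n. dn n w v < \<delta> \<longrightarrow> P w)"
  unfolding nb_def
proof (subst eventually_INF_base)
  show "{0::real<..} \<noteq> {}" by auto
  show "\<And>a b. a \<in> {0::real<..} \<Longrightarrow> b \<in> {0<..} \<Longrightarrow> \<exists>x\<in>{0<..}.
     principal {w \<in> tuples n. dn n w v < x} \<le> inf (principal {w \<in> tuples n. dn n w v < a}) (principal {w \<in> tuples n. dn n w v < b})"
    by (rule_tac x="min a b" in bexI) auto
qed (auto simp: eventually_principal)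

lemma cont_iff_tendsto:
  fixes F :: "(real^'d) list \<Rightarrow> real"
  shows "(\<forall>e>0. \<exists>\<delta>>0. \<forall>w\<in>tuples n. dn n w v < \<delta> \<longrightarrow> \<bar>F w - F v\<bar> < e) \<longleftrightarrow> (F \<longlongrightarrow> F v) (nb n v)"
  by (simp add: tendsto_iff eventually_nb dist_real_def)

lemma dn_sel_le:
  assumes "inj_on \<pi> {..<k}" "\<pi> ` {..<k} \<subseteq> {..<n}"
  shows "dn k (sel \<pi> k w) (sel \<pi> k v) \<le> dn n w v"
proof -
  have "dn k (sel \<pi> k w) (sel \<pi> k v) = (\<Sum>p<k. norm (w ! \<pi> p - v ! \<pi> p))" by (simp add: dn_def)
  also have "\<dots> = (\<Sum>j\<in>\<pi> ` {..<k}. norm (w!j - v!j))" by (simp add: sum.reindex[OF assms(1)])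
  also have "\<dots> \<le> dn n w v" unfolding dn_def by (rule sum_mono2) (use assms in auto)
  finally show ?thesis .
qed

lemma term_tendsto:
  assumes A: "schwartz k A" and inj: "inj_on \<pi> {..<k}" and rng: "\<pi> ` {..<k} \<subseteq> {..<n}"
  shows "((\<lambda>w. A (sel \<pi> k w)) \<longlongrightarrow> A (sel \<pi> k v)) (nb n v)"
proof -
  have "\<forall>e>0. \<exists>\<delta>>0. \<forall>w\<in>tuples n. dn n w v < \<delta> \<longrightarrow> \<bar>A (sel \<pi> k w) - A (sel \<pi> k v)\<bar> < e"
  proof (intro allI impI)
    fix e :: real assume e: "e > 0"
    obtain \<delta> where d: "\<delta> > 0" "\<forall>ys\<in>tuples k. dn k ys (sel \<pi> k v) < \<delta> \<longrightarrow> \<bar>A ys - A (sel \<pi> k v)\<bar> < e"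
      using sch_cont[OF A sel_tuples e] unfolding dn_def by blast
    show "\<exists>\<delta>>0. \<forall>w\<in>tuples n. dn n w v < \<delta> \<longrightarrow> \<bar>A (sel \<pi> k w) - A (sel \<pi> k v)\<bar> < e"
      using d dn_sel_le[OF inj rng] by (meson le_less_trans sel_tuples)
  qed
  then show ?thesis using cont_iff_tendsto[of n v "\<lambda>w. A (sel \<pi> k w)"] by simp
qed

definition good :: "nat \<Rightarrow> nat \<Rightarrow> nat \<Rightarrow> (nat \<Rightarrow> nat) \<Rightarrow> (nat \<Rightarrow> nat) \<Rightarrow> bool" where
  "good k l n \<pi> \<rho> \<longleftrightarrow> inj_on \<pi> {..<k} \<and> \<pi> ` {..<k} \<subseteq> {..<n} \<and> inj_on \<rho> {..<l} \<and> \<rho> ` {..<l} \<subseteq> {..<n}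
     \<and> {..<n} \<subseteq> \<pi> ` {..<k} \<union> \<rho> ` {..<l}"

definition cls :: "nat \<Rightarrow> nat \<Rightarrow> nat \<Rightarrow> ((real^'d) list \<Rightarrow> real) \<Rightarrow> bool" where
  "cls k l n F \<longleftrightarrow> (\<exists>m (As :: nat \<Rightarrow> (real^'d) list \<Rightarrow> real) \<pi>s (Bs :: nat \<Rightarrow> (real^'d) list \<Rightarrow> real) \<rho>s. (\<forall>q<m. schwartz k (As q) \<and> schwartz l (Bs q) \<and> good k l n (\<pi>s q) (\<rho>s q))
     \<and> (\<forall>v\<in>tuples n. F v = (\<Sum>q<m. As q (sel (\<pi>s q) k v) * Bs q (sel (\<rho>s q) l v))))"

lemma sum_sel: "inj_on \<pi> {..<k} \<Longrightarrow> (\<Sum>p<k. norm (sel \<pi> k v ! p)) = (\<Sum>j\<in>\<pi> ` {..<k}. norm (v!j))"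
  by (simp add: sum.reindex)

lemma sum_norm_cover:
  assumes g: "good k l n \<pi> \<rho>"
  shows "(\<Sum>j<n. norm (v!j)) \<le> (\<Sum>p<k. norm (sel \<pi> k v ! p)) + (\<Sum>p<l. norm (sel \<rho> l v ! p))"
proof -
  have "(\<Sum>j<n. norm (v!j)) \<le> (\<Sum>j\<in>\<pi> ` {..<k} \<union> \<rho> ` {..<l}. norm (v!j))"
    by (rule sum_mono2) (use g in \<open>auto simp: good_def\<close>)
  also have "\<dots> \<le> (\<Sum>j\<in>\<pi> ` {..<k}. norm (v!j)) + (\<Sum>j\<in>\<rho> ` {..<l}. norm (v!j))"
    by (simp add: sum_Un sum_nonneg)
  also have "\<dots> = (\<Sum>p<k. norm (sel \<pi> k v ! p)) + (\<Sum>p<l. norm (sel \<rho> l v ! p))"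
    using g unfolding good_def by (simp add: sum.reindex)
  finally show ?thesis .
qed

lemma pow_split: "(a::real) \<ge> 0 \<Longrightarrow> b \<ge> 0 \<Longrightarrow> (1 + (a + b)) ^ M \<le> (1 + a) ^ M * (1 + b) ^ M"
proof -
  assume "a \<ge> 0" "b \<ge> 0"
  then have "1 + (a + b) \<le> (1 + a) * (1 + b)" by (simp add: algebra_simps)
  then have "(1 + (a + b)) ^ M \<le> ((1 + a) * (1 + b)) ^ M" by (rule power_mono) (use \<open>a \<ge> 0\<close> \<open>b \<ge> 0\<close> in auto)
  then show ?thesis by (simp add: power_mult_distrib)
qed

lemma sum_pairs: "(\<Sum>r<2*m. f r) = (\<Sum>q<m. f (2*q) + f (Suc (2*q)))"
  by (induction m) (simp_all add: ac_simps)

lemma cls_step: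
  fixes F :: "(real^'d) list \<Rightarrow> real"
  assumes "cls k l n F"
  shows "(\<forall>xs\<in>tuples n. \<forall>e>0. \<exists>\<delta>>0. \<forall>ys\<in>tuples n.
             (\<Sum>j<n. norm (ys!j - xs!j)) < \<delta> \<longrightarrow> \<bar>F ys - F xs\<bar> < e)
       \<and> (\<forall>M::nat. \<exists>C. \<forall>xs\<in>tuples n. (1 + (\<Sum>j<n. norm (xs!j))) ^ M * \<bar>F xs\<bar> \<le> C)
       \<and> (\<forall>j<n. \<forall>c::'d. \<exists>G'. (\<forall>xs\<in>tuples n.
             ((\<lambda>t. F (xs[j := xs!j + t *\<^sub>R axis c 1])) has_real_derivative G' xs) (at 0))
             \<and> cls k l n G')"
proof -
  obtain m and As :: "nat \<Rightarrow> (real^'d) list \<Rightarrow> real" and \<pi>s and Bs :: "nat \<Rightarrow> (real^'d) list \<Rightarrow> real" and \<rho>s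
    where P: "\<And>q. q < m \<Longrightarrow> schwartz k (As q) \<and> schwartz l (Bs q) \<and> good k l n (\<pi>s q) (\<rho>s q)"
      and eq: "\<And>v. v \<in> tuples n \<Longrightarrow> F v = (\<Sum>q<m. As q (sel (\<pi>s q) k v) * Bs q (sel (\<rho>s q) l v))"
    using assms unfolding cls_def by blast
  define T where "T v = (\<Sum>q<m. As q (sel (\<pi>s q) k v) * Bs q (sel (\<rho>s q) l v))" for v
  have cont: "\<forall>xs\<in>tuples n. \<forall>e>0. \<exists>\<delta>>0. \<forall>ys\<in>tuples n.
             (\<Sum>j<n. norm (ys!j - xs!j)) < \<delta> \<longrightarrow> \<bar>F ys - F xs\<bar> < e"
  proof
    fix v :: "(real^'d) list" assume v: "v \<in> tuples n"
    have "(T \<longlongrightarrow> T v) (nb n v)"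
      unfolding T_def
      by (intro tendsto_sum tendsto_mult term_tendsto) (use P in \<open>auto simp: good_def\<close>)
    moreover have "eventually (\<lambda>w. T w = F w) (nb n v)"
      unfolding eventually_nb by (rule exI[of _ 1]) (auto simp: eq T_def)
    ultimately have "(F \<longlongrightarrow> F v) (nb n v)"
      using eq[OF v] by (simp add: T_def tendsto_cong)
    then show "\<forall>e>0. \<exists>\<delta>>0. \<forall>ys\<in>tuples n. (\<Sum>j<n. norm (ys!j - v!j)) < \<delta> \<longrightarrow> \<bar>F ys - F v\<bar> < e"
      using cont_iff_tendsto[of n v F] by (simp add: dn_def)
  qed
  have decay: "\<forall>M::nat. \<exists>C. \<forall>xs\<in>tuples n. (1 + (\<Sum>j<n. norm (xs!j))) ^ M * \<bar>F xs\<bar> \<le> C"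
  proof
    fix M :: nat
    have "\<exists>CA. \<forall>q. q < m \<longrightarrow> (\<forall>xs\<in>tuples k. (1 + (\<Sum>j<k. norm (xs!j))) ^ M * \<bar>As q xs\<bar> \<le> CA q)"
      by (rule choice) (use P sch_decay in blast)
    then obtain CA where CA: "\<And>q xs. q < m \<Longrightarrow> xs \<in> tuples k \<Longrightarrow> (1 + (\<Sum>j<k. norm (xs!j))) ^ M * \<bar>As q xs\<bar> \<le> CA q"
      by blast
    have "\<exists>CB. \<forall>q. q < m \<longrightarrow> (\<forall>xs\<in>tuples l. (1 + (\<Sum>j<l. norm (xs!j))) ^ M * \<bar>Bs q xs\<bar> \<le> CB q)"
      by (rule choice) (use P sch_decay in blast)
    then obtain CB where CB: "\<And>q xs. q < m \<Longrightarrow> xs \<in> tuples l \<Longrightarrow> (1 + (\<Sum>j<l. norm (xs!j))) ^ M * \<bar>Bs q xs\<bar> \<le> CB q"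
      by blast
    show "\<exists>C. \<forall>xs\<in>tuples n. (1 + (\<Sum>j<n. norm (xs!j))) ^ M * \<bar>F xs\<bar> \<le> C"
    proof (intro exI ballI)
      fix v :: "(real^'d) list" assume v: "v \<in> tuples n"
      let ?S = "\<Sum>j<n. norm (v!j)"
      have S0: "?S \<ge> 0" by (simp add: sum_nonneg)
      have "(1 + ?S) ^ M * \<bar>F v\<bar> \<le> (1 + ?S) ^ M * (\<Sum>q<m. \<bar>As q (sel (\<pi>s q) k v)\<bar> * \<bar>Bs q (sel (\<rho>s q) l v)\<bar>)"
        unfolding eq[OF v]
      proof (rule mult_left_mono)
        show "0 \<le> (1 + ?S) ^ M" by (intro zero_le_power add_nonneg_nonneg sum_nonneg) auto
      qed (auto intro: order.trans[OF sum_abs] simp: abs_mult)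
      also have "\<dots> = (\<Sum>q<m. (1 + ?S) ^ M * (\<bar>As q (sel (\<pi>s q) k v)\<bar> * \<bar>Bs q (sel (\<rho>s q) l v)\<bar>))"
        by (simp add: sum_distrib_left)
      also have "\<dots> \<le> (\<Sum>q<m. CA q * CB q)"
      proof (rule sum_mono)
        fix q assume q: "q \<in> {..<m}"
        let ?a = "\<Sum>p<k. norm (sel (\<pi>s q) k v ! p)" and ?b = "\<Sum>p<l. norm (sel (\<rho>s q) l v ! p)"
        have a0: "?a \<ge> 0" and b0: "?b \<ge> 0" by (auto intro: sum_nonneg)
        have "(1 + ?S) ^ M \<le> (1 + (?a + ?b)) ^ M"
          by (rule power_mono) (use sum_norm_cover[of k l n "\<pi>s q" "\<rho>s q" v] P q S0 in \<open>auto intro: sum_nonneg\<close>)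
        also have "\<dots> \<le> (1 + ?a) ^ M * (1 + ?b) ^ M" by (rule pow_split[OF a0 b0])
        finally have le: "(1 + ?S) ^ M \<le> (1 + ?a) ^ M * (1 + ?b) ^ M" .
        have ca: "(1 + ?a) ^ M * \<bar>As q (sel (\<pi>s q) k v)\<bar> \<le> CA q" using CA[of q "sel (\<pi>s q) k v"] q by simp
        have cb: "(1 + ?b) ^ M * \<bar>Bs q (sel (\<rho>s q) l v)\<bar> \<le> CB q" using CB[of q "sel (\<rho>s q) l v"] q by simp
        have "(1 + ?S) ^ M * (\<bar>As q (sel (\<pi>s q) k v)\<bar> * \<bar>Bs q (sel (\<rho>s q) l v)\<bar>)
          \<le> ((1 + ?a) ^ M * (1 + ?b) ^ M) * (\<bar>As q (sel (\<pi>s q) k v)\<bar> * \<bar>Bs q (sel (\<rho>s q) l v)\<bar>)"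
          by (rule mult_right_mono[OF le]) simp
        also have "\<dots> = ((1 + ?a) ^ M * \<bar>As q (sel (\<pi>s q) k v)\<bar>) * ((1 + ?b) ^ M * \<bar>Bs q (sel (\<rho>s q) l v)\<bar>)"
          by (simp add: mult_ac)
        also have "\<dots> \<le> CA q * CB q"
          by (rule mult_mono[OF ca cb]) (use a0 b0 ca in \<open>auto intro: order.trans[rotated]\<close>)
        finally show "(1 + ?S) ^ M * (\<bar>As q (sel (\<pi>s q) k v)\<bar> * \<bar>Bs q (sel (\<rho>s q) l v)\<bar>) \<le> CA q * CB q" .
      qed
      finally show "(1 + ?S) ^ M * \<bar>F v\<bar> \<le> (\<Sum>q<m. CA q * CB q)" .
    qed
  qed
  have deriv: "\<forall>j<n. \<forall>c::'d. \<exists>G'. (\<forall>xs\<in>tuples n.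
             ((\<lambda>t. F (xs[j := xs!j + t *\<^sub>R axis c 1])) has_real_derivative G' xs) (at 0))
             \<and> cls k l n G'"
  proof (intro allI impI)
    fix j c assume j: "j < n"
    define As' where "As' r = (if even r then dT k (As (r div 2)) (\<pi>s (r div 2)) j c else As (r div 2))" for r
    define Bs' where "Bs' r = (if even r then Bs (r div 2) else dT l (Bs (r div 2)) (\<rho>s (r div 2)) j c)" for r
    define G' where "G' v = (\<Sum>r<2*m. As' r (sel (\<pi>s (r div 2)) k v) * Bs' r (sel (\<rho>s (r div 2)) l v))" for v
    have G'_alt: "G' v = (\<Sum>q<m. dT k (As q) (\<pi>s q) j c (sel (\<pi>s q) k v) * Bs q (sel (\<rho>s q) l v)
         + As q (sel (\<pi>s q) k v) * dT l (Bs q) (\<rho>s q) j c (sel (\<rho>s q) l v))" for v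
      unfolding G'_def sum_pairs by (simp add: As'_def Bs'_def)
    have "\<forall>xs\<in>tuples n. ((\<lambda>t. F (xs[j := xs!j + t *\<^sub>R axis c 1])) has_real_derivative G' xs) (at 0)"
    proof
      fix v :: "(real^'d) list" assume v: "v \<in> tuples n"
      have tv: "v[j := v!j + t *\<^sub>R axis c 1] \<in> tuples n" for t using v by (simp add: tuples_def)
      have "((\<lambda>t. T (v[j := v!j + t *\<^sub>R axis c 1])) has_real_derivative
          (\<Sum>q<m. dT k (As q) (\<pi>s q) j c (sel (\<pi>s q) k v) * Bs q (sel (\<rho>s q) l (v[j := v!j + 0 *\<^sub>R axis c 1]))
             + dT l (Bs q) (\<rho>s q) j c (sel (\<rho>s q) l v) * As q (sel (\<pi>s q) k (v[j := v!j + 0 *\<^sub>R axis c 1])))) (at 0)"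
        unfolding T_def
        by (intro DERIV_sum DERIV_mult dT_deriv) (use P v j in \<open>auto simp: good_def\<close>)
      moreover have "(\<lambda>t. T (v[j := v!j + t *\<^sub>R axis c 1])) = (\<lambda>t. F (v[j := v!j + t *\<^sub>R axis c 1]))"
        using eq tv by (auto simp: T_def)
      ultimately show "((\<lambda>t. F (v[j := v!j + t *\<^sub>R axis c 1])) has_real_derivative G' v) (at 0)"
        by (simp add: G'_alt mult_ac)
    qed
    moreover have "cls k l n G'"
      unfolding cls_def
    proof (intro exI conjI allI impI ballI)
      fix r assume r: "r < 2*m"
      then have q: "r div 2 < m" by simp
      show "schwartz k (As' r)" using P[OF q] dT_schwartz by (auto simp: As'_def good_def)
      show "schwartz l (Bs' r)" using P[OF q] dT_schwartz by (auto simp: Bs'_def good_def)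
      show "good k l n (\<pi>s (r div 2)) (\<rho>s (r div 2))" using P[OF q] by simp
    next
      fix v :: "(real^'d) list" assume "v \<in> tuples n"
      show "G' v = (\<Sum>r<2*m. As' r (sel (\<pi>s (r div 2)) k v) * Bs' r (sel (\<rho>s (r div 2)) l v))"
        by (simp add: G'_def)
    qed
    ultimately show "\<exists>G'. (\<forall>xs\<in>tuples n.
             ((\<lambda>t. F (xs[j := xs!j + t *\<^sub>R axis c 1])) has_real_derivative G' xs) (at 0))
             \<and> cls k l n G'" by blast
  qed
  show ?thesis using cont decay deriv by blast
qed

lemma cls_schwartz:
  fixes F :: "(real^'d) list \<Rightarrow> real"
  assumes "cls k l n F"
  shows "schwartz n F"
  using assms
proof (coinduction arbitrary: n F rule: schwartz.coinduct)
  case (schwartz n F)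
  note s = cls_step[OF schwartz]
  show ?case
  proof (intro exI conjI)
    show "\<forall>xs\<in>tuples n. \<forall>e>0. \<exists>\<delta>>0. \<forall>ys\<in>tuples n. (\<Sum>j<n. norm (ys ! j - xs ! j)) < \<delta> \<longrightarrow> \<bar>F ys - F xs\<bar> < e"
      using s by blast
    show "\<forall>m. \<exists>C. \<forall>xs\<in>tuples n. (1 + (\<Sum>j<n. norm (xs ! j))) ^ m * \<bar>F xs\<bar> \<le> C"
      using s by blast
    show "\<forall>j<n. \<forall>c. \<exists>G'. (\<forall>xs\<in>tuples n. ((\<lambda>t. F (xs[j := xs ! j + t *\<^sub>R axis c 1])) has_real_derivative G' xs) (at 0)) \<and>
                     ((\<exists>n' F'. n = n' \<and> G' = F' \<and> cls k l n' F') \<or> schwartz n G')"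
      using conjunct2[OF conjunct2[OF s]] by fast
  qed auto
qed



lemma prod_summable:
  fixes a :: "'a \<Rightarrow> real" and b :: "'b \<Rightarrow> real"
  assumes "a summable_on A" "b summable_on B" "\<And>x. a x \<ge> 0" "\<And>y. b y \<ge> 0"
  shows "(\<lambda>(x,y). a x * b y) summable_on (A \<times> B)"
proof (rule summable_on_SigmaI[where g = "\<lambda>x. a x * infsum b B"])
  fix x assume "x \<in> A"
  show "((\<lambda>y. case (x, y) of (x, y) \<Rightarrow> a x * b y) has_sum a x * infsum b B) B"
    using has_sum_cmult_right[OF has_sum_infsum[OF assms(2)]] by simp
next
  show "(\<lambda>x. a x * infsum b B) summable_on A" by (rule summable_on_cmult_left[OF assms(1)])
next
  fix x y show "0 \<le> (case (x, y) of (x, y) \<Rightarrow> a x * b y)" using assms by simp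
qed

lemma list_prod_summable:
  fixes f :: "'a \<Rightarrow> real"
  assumes f: "f summable_on UNIV" "\<And>x. f x \<ge> 0"
  shows "(\<lambda>zs. \<Prod>j<n. f (zs!j)) summable_on tuples n"
proof (induction n)
  case 0
  have "(tuples 0 :: 'a list set) = {[]}" by (auto simp: tuples_def)
  then show ?case by simp
next
  case (Suc n)
  have T: "tuples (Suc n) = (\<lambda>(x,xs). x # xs) ` (UNIV \<times> tuples n)"
    by (auto simp: tuples_def image_iff length_Suc_conv)
  have inj: "inj_on (\<lambda>(x,xs). x # xs) (UNIV \<times> tuples n)" by (auto simp: inj_on_def)
  have "(\<lambda>(x,xs). f x * (\<Prod>j<n. f (xs!j))) summable_on (UNIV \<times> tuples n)"
    by (rule prod_summable[OF f(1) Suc]) (auto intro: f(2) prod_nonneg)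
  moreover have "((\<lambda>zs. \<Prod>j<Suc n. f (zs!j)) \<circ> (\<lambda>(x,xs). x # xs)) = (\<lambda>(x,xs). f x * (\<Prod>j<n. f (xs!j)))"
    by (auto simp: prod.lessThan_Suc_shift simp del: prod.lessThan_Suc)
  ultimately show ?case unfolding T by (simp add: summable_on_reindex[OF inj])
qed

definition phi :: "int \<Rightarrow> real" where "phi t = inverse ((1 + \<bar>real_of_int t\<bar>) ^ 2)"

lemma phi_nonneg: "phi t \<ge> 0" by (simp add: phi_def)

lemma phi_summable: "phi summable_on UNIV"
proof -
  have s0: "summable (\<lambda>n. inverse (real (Suc n) ^ 2))"
    using inverse_power_summable[of 2, where 'a=real] by (subst summable_Suc_iff) simp
  have s1: "(phi \<circ> int) summable_on UNIV"
  proof -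
    have "(phi \<circ> int) = (\<lambda>n. inverse (real (Suc n) ^ 2))" by (auto simp: phi_def)
    then show ?thesis using s0 summable_on_UNIV_nonneg_real_iff by simp
  qed
  have s2: "(phi \<circ> (\<lambda>n. - int (Suc n))) summable_on UNIV"
  proof -
    have "summable (\<lambda>n. (phi \<circ> (\<lambda>n. - int (Suc n))) n)"
    proof (rule summable_comparison_test[OF _ s0])
      show "\<exists>N. \<forall>n\<ge>N. norm ((phi \<circ> (\<lambda>n. - int (Suc n))) n) \<le> inverse (real (Suc n) ^ 2)"
        by (auto simp: phi_def intro!: le_imp_inverse_le power_mono)
    qed
    then show ?thesis using summable_on_UNIV_nonneg_real_iff[of "phi \<circ> (\<lambda>n. - int (Suc n))"]
      by (simp add: phi_nonneg o_def)
  qed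
  have "phi summable_on (range int \<union> range (\<lambda>n. - int (Suc n)))"
  proof (rule summable_on_Un_disjoint)
    show "phi summable_on range int" using s1 by (simp add: summable_on_reindex)
    show "phi summable_on range (\<lambda>n. - int (Suc n))"
      using s2 by (subst summable_on_reindex) (auto simp: inj_on_def)
  qed auto
  moreover have "range int \<union> range (\<lambda>n. - int (Suc n)) = UNIV"
  proof -
    have "t \<in> range int \<union> range (\<lambda>n. - int (Suc n))" for t :: int
    proof (cases "t \<ge> 0")
      case True then show ?thesis by (auto intro: image_eqI[of _ _ "nat t"])
    next
      case False then show ?thesis by (auto intro!: image_eqI[of _ _ "nat (- t - 1)"])
    qed
    then show ?thesis by auto
  qed
  ultimately show ?thesis by simp
qed

definition wv :: "int^'d \<Rightarrow> real" where "wv z = (\<Prod>c\<in>UNIV. phi (z $ c))"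

lemma wv_nonneg: "wv z \<ge> 0" by (simp add: wv_def prod_nonneg phi_nonneg)

lemma wv_summable: "(wv :: int^'d \<Rightarrow> real) summable_on UNIV"
proof -
  obtain cs :: "'d list" where cs: "set cs = UNIV" "distinct cs"
    using finite_distinct_list[of "UNIV :: 'd set"] by auto
  define e where "e z = map (\<lambda>c. z $ c) cs" for z :: "int^'d"
  have inj: "inj e"
  proof (rule injI)
    fix z1 z2 assume "e z1 = e z2"
    then have "\<forall>c\<in>set cs. z1 $ c = z2 $ c" by (auto simp: e_def)
    then show "z1 = z2" using cs by (simp add: vec_eq_iff)
  qed
  have bij: "bij_betw ((!) cs) {..<length cs} UNIV" using bij_betw_nth[OF cs(2) refl] cs by simp
  have w: "wv z = (\<Prod>j<length cs. phi (e z ! j))" for z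
    unfolding wv_def e_def using prod.reindex_bij_betw[OF bij, of "\<lambda>c. phi (z $ c)"] by simp
  have "(\<lambda>zs. \<Prod>j<length cs. phi (zs!j)) summable_on tuples (length cs)"
    by (rule list_prod_summable[OF phi_summable phi_nonneg])
  then have "(\<lambda>zs. \<Prod>j<length cs. phi (zs!j)) summable_on range e"
    by (rule summable_on_subset_banach) (auto simp: tuples_def e_def)
  then have "((\<lambda>zs. \<Prod>j<length cs. phi (zs!j)) \<circ> e) summable_on UNIV"
    by (simp add: summable_on_reindex[OF inj])
  moreover have "((\<lambda>zs. \<Prod>j<length cs. phi (zs!j)) \<circ> e) = wv" by (auto simp: w)
  ultimately show ?thesis by simp
qed

definition W :: "(int^'d) list \<Rightarrow> real" where "W zs = (\<Prod>j<length zs. wv (zs!j))"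

lemma W_summable: "(W :: (int^'d) list \<Rightarrow> real) summable_on tuples n"
proof -
  have "(\<lambda>zs. \<Prod>j<n. wv (zs!j)) summable_on (tuples n :: (int^'d) list set)"
    by (rule list_prod_summable[OF wv_summable wv_nonneg])
  then show ?thesis by (rule summable_on_cong[THEN iffD1, rotated]) (auto simp: W_def tuples_def)
qed

lemma falling_bound:
  fixes \<eta> :: "int^'d \<Rightarrow> nat"
  assumes eta: "\<And>x. real (\<eta> x) \<le> m0 * (1 + norm (rvec x)) ^ q0"
    and z: "length z = n" and B: "\<And>j. j < n \<Longrightarrow> 1 + norm (rvec (z!j)) \<le> B"
  shows "\<bar>falling \<eta> z\<bar> \<le> ((\<bar>m0\<bar> + n) * B ^ q0) ^ n"
proof -
  have B1: "B \<ge> 1" if "n > 0" using B[of 0] that by (smt (verit) norm_ge_zero)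
  have "\<bar>falling \<eta> z\<bar> = (\<Prod>i<n. \<bar>real (\<eta> (z!i)) - real (card {j. j < i \<and> z!j = z!i})\<bar>)"
    by (simp add: falling_def z abs_prod)
  also have "\<dots> \<le> (\<Prod>i<n. (\<bar>m0\<bar> + n) * B ^ q0)"
  proof (rule prod_mono)
    fix i assume i: "i \<in> {..<n}"
    have Bi: "B \<ge> 1" using B1 i by auto
    have c: "real (card {j. j < i \<and> z!j = z!i}) \<le> n"
    proof -
      have "card {j. j < i \<and> z!j = z!i} \<le> card {..<i}" by (rule card_mono) auto
      then show ?thesis using i by simp
    qed
    have "real (\<eta> (z!i)) \<le> \<bar>m0\<bar> * (1 + norm (rvec (z!i))) ^ q0"
      using eta[of "z!i"] by (smt (verit) mult_right_mono zero_le_power norm_ge_zero)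
    also have "\<dots> \<le> \<bar>m0\<bar> * B ^ q0"
      using B[of i] i by (intro mult_left_mono power_mono) auto
    finally have e: "real (\<eta> (z!i)) \<le> \<bar>m0\<bar> * B ^ q0" .
    have "1 \<le> B ^ q0" using Bi by simp
    then have "real n \<le> real n * B ^ q0" by (simp add: mult_le_cancel_left1)
    then show "0 \<le> \<bar>real (\<eta> (z!i)) - real (card {j. j < i \<and> z!j = z!i})\<bar> \<and>
        \<bar>real (\<eta> (z!i)) - real (card {j. j < i \<and> z!j = z!i})\<bar> \<le> (\<bar>m0\<bar> + n) * B ^ q0"
      using e c by (simp add: algebra_simps)
  qed
  also have "\<dots> = ((\<bar>m0\<bar> + n) * B ^ q0) ^ n" by simp
  finally show ?thesis .
qed

lemma W_bound:
  fixes z :: "(int^'d) list"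
  assumes B: "\<And>j. j < length z \<Longrightarrow> 1 + norm (rvec (z!j)) \<le> B"
  shows "1 \<le> B ^ (2 * length z * CARD('d)) * W z"
proof -
  have "B ^ (2 * length z * CARD('d)) * W z = (\<Prod>j<length z. \<Prod>c\<in>UNIV. B\<^sup>2 * phi (z!j $ c))"
  proof -
    have "B ^ (2 * length z * CARD('d)) = ((B^2)^CARD('d))^length z"
      by (simp only: power_mult[symmetric]) (simp add: mult_ac)
    then show ?thesis by (simp add: W_def wv_def prod.distrib)
  qed
  also have "\<dots> \<ge> (\<Prod>j<length z. \<Prod>c\<in>(UNIV::'d set). 1)"
  proof (intro prod_mono conjI)
    fix j c assume j: "j \<in> {..<length z}"
    have "\<bar>real_of_int (z!j $ c)\<bar> \<le> norm (rvec (z!j))"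
      using component_le_norm_cart[of "rvec (z!j)" c] by (simp add: rvec_def)
    then have le: "1 + \<bar>real_of_int (z!j $ c)\<bar> \<le> B" using B[of j] j by simp
    have "(1 + \<bar>real_of_int (z!j $ c)\<bar>)\<^sup>2 \<le> B\<^sup>2" by (rule power_mono[OF le]) simp
    then show "1 \<le> B\<^sup>2 * phi (z!j $ c)" unfolding phi_def
      by (simp add: field_simps)
  qed auto
  finally show ?thesis by simp
qed

lemma summable_main:
  fixes \<Phi> :: "(real^'d) list \<Rightarrow> real" and \<eta> :: "int^'d \<Rightarrow> nat"
  assumes \<Phi>: "schwartz n \<Phi>" and pg: "poly_growth \<eta>" and N: "1 \<le> N"
  shows "(\<lambda>z. \<Phi> (scale N z) * falling \<eta> z) summable_on tuples n"
proof -
  obtain m0 q0 where eta: "\<And>x. real (\<eta> x) \<le> m0 * (1 + norm (rvec x)) ^ q0"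
    using pg unfolding poly_growth_def by blast
  define K where "K = q0 * n + 2 * n * CARD('d)"
  obtain C where C: "\<And>v. v \<in> tuples n \<Longrightarrow> (1 + (\<Sum>j<n. norm (v!j))) ^ K * \<bar>\<Phi> v\<bar> \<le> C"
    using \<Phi> unfolding schwartz.simps[of n] by blast
  define Cf where "Cf = (\<bar>m0\<bar> + real n) ^ n"
  have Nr: "real N \<ge> 1" using N by simp
  have bound: "norm (\<Phi> (scale N z) * falling \<eta> z) \<le> (Cf * (real N ^ K * C)) * W z" if z: "z \<in> tuples n" for z
  proof -
    have lz: "length z = n" using z by (simp add: tuples_def)
    define S where "S = (\<Sum>j<n. norm (rvec (z!j)))"
    define B where "B = 1 + S"
    have S0: "S \<ge> 0" by (simp add: S_def sum_nonneg)
    have Bj: "1 + norm (rvec (z!j)) \<le> B" if "j < n" for j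
    proof -
      have "norm (rvec (z!j)) \<le> S" unfolding S_def
        by (rule member_le_sum[of j "{..<n}" "\<lambda>j. norm (rvec (z!j))"]) (use that in auto)
      then show ?thesis by (simp add: B_def)
    qed
    have B1: "B \<ge> 1" using S0 by (simp add: B_def)
    have fb: "\<bar>falling \<eta> z\<bar> \<le> Cf * B ^ (q0 * n)"
      using falling_bound[OF eta lz Bj] by (simp only: Cf_def power_mult_distrib power_mult)
    have wb: "1 \<le> B ^ (2 * n * CARD('d)) * W z" using W_bound[of z B] Bj lz by simp
    have sc: "scale N z \<in> tuples n" using lz by (simp add: scale_def tuples_def)
    have ssum: "(\<Sum>j<n. norm (scale N z ! j)) = S / real N"
    proof -
      have "(\<Sum>j<n. norm (scale N z ! j)) = (\<Sum>j<n. norm (rvec (z!j)) / real N)"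
        by (rule sum.cong) (use lz Nr in \<open>auto simp: scale_def\<close>)
      then show ?thesis by (simp add: S_def sum_divide_distrib)
    qed
    have pb: "(1 + S / real N) ^ K * \<bar>\<Phi> (scale N z)\<bar> \<le> C" using C[OF sc] ssum by simp
    have "real N * (1 + S / real N) = real N + S" using Nr by (simp add: distrib_left)
    then have "B \<le> real N * (1 + S / real N)" using Nr by (simp add: B_def)
    then have "B ^ K \<le> (real N * (1 + S / real N)) ^ K" by (rule power_mono) (use B1 in auto)
    then have "B ^ K * \<bar>\<Phi> (scale N z)\<bar> \<le> real N ^ K * ((1 + S / real N) ^ K * \<bar>\<Phi> (scale N z)\<bar>)"
    proof -
      have "B ^ K * \<bar>\<Phi> (scale N z)\<bar> \<le> (real N * (1 + S / real N)) ^ K * \<bar>\<Phi> (scale N z)\<bar>"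
        by (rule mult_right_mono[OF \<open>B ^ K \<le> (real N * (1 + S / real N)) ^ K\<close> abs_ge_zero])
      also have "\<dots> = real N ^ K * ((1 + S / real N) ^ K * \<bar>\<Phi> (scale N z)\<bar>)"
        by (simp only: power_mult_distrib mult.assoc)
      finally show ?thesis .
    qed
    also have "\<dots> \<le> real N ^ K * C" using pb by (simp add: mult_left_mono)
    finally have phb: "B ^ K * \<bar>\<Phi> (scale N z)\<bar> \<le> real N ^ K * C" .
    have W0: "W z \<ge> 0" by (simp add: W_def prod_nonneg wv_nonneg)
    have Cf0: "Cf \<ge> 0" by (simp add: Cf_def)
    have "norm (\<Phi> (scale N z) * falling \<eta> z) = \<bar>\<Phi> (scale N z)\<bar> * \<bar>falling \<eta> z\<bar>" by (simp add: abs_mult)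
    also have "\<dots> \<le> \<bar>\<Phi> (scale N z)\<bar> * (Cf * B ^ (q0 * n))" by (rule mult_left_mono[OF fb]) simp
    also have "\<dots> \<le> \<bar>\<Phi> (scale N z)\<bar> * (Cf * B ^ (q0 * n)) * (B ^ (2 * n * CARD('d)) * W z)"
    proof -
      have "0 \<le> \<bar>\<Phi> (scale N z)\<bar> * (Cf * B ^ (q0 * n))" using Cf0 B1 by simp
      then show ?thesis using wb by (simp add: mult_le_cancel_left1)
    qed
    also have "\<dots> = Cf * W z * (B ^ K * \<bar>\<Phi> (scale N z)\<bar>)"
      by (simp add: K_def power_add mult_ac)
    also have "\<dots> \<le> Cf * W z * (real N ^ K * C)" by (rule mult_left_mono[OF phb]) (simp add: Cf0 W0)
    finally show ?thesis by (simp add: mult_ac)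
  qed
  have sumg: "(\<lambda>z. (Cf * (real N ^ K * C)) * W z) summable_on tuples n"
    by (rule summable_on_cmult_right[OF W_summable])
  have "(\<lambda>z. norm (\<Phi> (scale N z) * falling \<eta> z)) summable_on tuples n"
    by (rule summable_on_comparison_test[OF sumg bound]) (assumption, rule norm_ge_zero)
  then show ?thesis by (rule summable_on_iff_abs_summable_on_real[THEN iffD2])
qed



definition Jset :: "nat \<Rightarrow> nat \<Rightarrow> nat set set" where "Jset l h = {J. J \<subseteq> {..<l} \<and> card J = h}"
definition Iset :: "nat \<Rightarrow> nat set \<Rightarrow> (nat \<Rightarrow> nat) set" where "Iset k J = {i \<in> J \<rightarrow>\<^sub>E {..<k}. inj_on i J}"
definition rho :: "nat \<Rightarrow> nat set \<Rightarrow> (nat \<Rightarrow> nat) \<Rightarrow> nat \<Rightarrow> nat" where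
  "rho k J i j = (if j \<in> J then i j else k + pos J j)"

lemma finite_Jset: "finite (Jset l h)"
  by (rule finite_subset[of _ "Pow {..<l}"]) (auto simp: Jset_def)

lemma finite_Iset: "finite (Iset k J)" if "finite J"
  by (rule finite_subset[of _ "J \<rightarrow>\<^sub>E {..<k}"]) (auto simp: Iset_def finite_PiE that)

lemma finite_Iset_J: "J \<in> Jset l h \<Longrightarrow> finite (Iset k J)"
  by (rule finite_Iset) (auto simp: Jset_def intro: finite_subset)

lemma finite_P: "finite (Sigma (Jset l h) (Iset k))"
  by (intro finite_SigmaI finite_Jset finite_Iset_J)

lemma good_rho:
  assumes J: "J \<in> Jset l h" and i: "i \<in> Iset k J" and hl: "h \<le> l"
  shows "good k l (k + l - h) id (rho k J i)"
proof -
  have Jl: "J \<subseteq> {..<l}" and cJ: "card J = h" using J by (auto simp: Jset_def)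
  have pe: "i \<in> J \<rightarrow>\<^sub>E {..<k}" and ij: "inj_on i J" using i by (auto simp: Iset_def)
  have lfl: "length (fl J l) = l - h" using length_fl[OF Jl] cJ by simp
  have posb: "pos J j < l - h" if "j < l" "j \<notin> J" for j using fl_nth_pos[OF that] lfl by simp
  have inj: "inj_on (rho k J i) {..<l}"
  proof (rule inj_onI)
    fix j1 j2 assume j1: "j1 \<in> {..<l}" and j2: "j2 \<in> {..<l}" and e: "rho k J i j1 = rho k J i j2"
    show "j1 = j2"
    proof (cases "j1 \<in> J"; cases "j2 \<in> J")
      assume a: "j1 \<in> J" "j2 \<in> J"
      then have "i j1 = i j2" using e by (simp add: rho_def)
      then show ?thesis by (rule inj_onD[OF ij _ a])
    next
      assume a: "j1 \<in> J" "j2 \<notin> J"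
      then have "i j1 < k" using PiE_mem[OF pe a(1)] by simp
      then show ?thesis using e a by (simp add: rho_def)
    next
      assume a: "j1 \<notin> J" "j2 \<in> J"
      then have "i j2 < k" using PiE_mem[OF pe a(2)] by simp
      then show ?thesis using e a by (simp add: rho_def)
    next
      assume a: "j1 \<notin> J" "j2 \<notin> J"
      then have "pos J j1 = pos J j2" using e by (simp add: rho_def)
      then show ?thesis using fl_nth_pos[of j1 l J] fl_nth_pos[of j2 l J] a j1 j2 by (metis lessThan_iff)
    qed
  qed
  have rng: "rho k J i ` {..<l} \<subseteq> {..<k + l - h}"
  proof
    fix x assume "x \<in> rho k J i ` {..<l}"
    then obtain j where j: "j < l" "x = rho k J i j" by auto
    show "x \<in> {..<k + l - h}"
    proof (cases "j \<in> J")
      case True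
      then have "i j < k" using PiE_mem[OF pe True] by simp
      then show ?thesis using j True hl by (simp add: rho_def)
    next
      case False then show ?thesis using j posb[of j] hl by (auto simp: rho_def)
    qed
  qed
  have cov: "{..<k + l - h} \<subseteq> id ` {..<k} \<union> rho k J i ` {..<l}"
  proof
    fix x assume x: "x \<in> {..<k + l - h}"
    show "x \<in> id ` {..<k} \<union> rho k J i ` {..<l}"
    proof (cases "x < k")
      case True then show ?thesis by auto
    next
      case False
      then have q: "x - k < length (fl J l)" using x lfl hl by auto
      define j where "j = fl J l ! (x - k)"
      have "j \<in> set (fl J l)" using q by (simp add: j_def)
      then have jj: "j < l" "j \<notin> J" by (auto simp: set_fl)
      have "pos J j = x - k" using pos_fl_nth[OF q] by (simp add: j_def)
      then have "rho k J i j = x" using jj False by (simp add: rho_def)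
      then have "x \<in> rho k J i ` {..<l}" using jj(1) by (intro image_eqI[of _ _ j]) auto
      then show ?thesis by (rule UnI2)
    qed
  qed
  have idr: "id ` {..<k} \<subseteq> {..<k + l - h}" using hl by auto
  show ?thesis unfolding good_def using inj rng cov idr by simp
qed

lemma take_sel: "k \<le> length v \<Longrightarrow> take k v = sel id k v"
  by (rule nth_equalityI) auto

definition Fh :: "nat \<Rightarrow> nat \<Rightarrow> nat \<Rightarrow> ((real^'d) list \<Rightarrow> real) \<Rightarrow> ((real^'d) list \<Rightarrow> real) \<Rightarrow> (real^'d) list \<Rightarrow> real" where
  "Fh k l h G H v = (\<Sum>(J,i)\<in>Sigma (Jset l h) (Iset k). G (take k v) * H (sel (rho k J i) l v))"

lemma cls_Fh:
  fixes G H :: "(real^'d) list \<Rightarrow> real"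
  assumes G: "schwartz k G" and H: "schwartz l H" and hl: "h \<le> l"
  shows "cls k l (k + l - h) (Fh k l h G H)"
proof -
  let ?P = "Sigma (Jset l h) (Iset k)"
  have fP: "finite ?P" by (rule finite_P)
  obtain e where e: "bij_betw e {0..<card ?P} ?P" using ex_bij_betw_nat_finite[OF fP] by blast
  let ?\<rho>s = "\<lambda>q. rho k (fst (e q)) (snd (e q))"
  have c1: "\<forall>q<card ?P. schwartz k ((\<lambda>_. G) q) \<and> schwartz l ((\<lambda>_. H) q) \<and> good k l (k + l - h) ((\<lambda>_. id) q) (?\<rho>s q)"
  proof (intro allI impI)
    fix q assume q: "q < card ?P"
    then have "q \<in> {0..<card ?P}" by simp
    then have "e q \<in> ?P" using bij_betwE[OF e] by blast
    then show "schwartz k ((\<lambda>_. G) q) \<and> schwartz l ((\<lambda>_. H) q) \<and> good k l (k + l - h) ((\<lambda>_. id) q) (?\<rho>s q)"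
      using G H good_rho[OF _ _ hl] by (auto simp: mem_Sigma_iff)
  qed
  have c2: "\<forall>v\<in>tuples (k + l - h). Fh k l h G H v = (\<Sum>q<card ?P. (\<lambda>_. G) q (sel ((\<lambda>_. id) q) k v) * (\<lambda>_. H) q (sel (?\<rho>s q) l v))"
  proof
    fix v :: "(real^'d) list" assume v: "v \<in> tuples (k + l - h)"
    then have "k \<le> length v" using hl by (simp add: tuples_def)
    then have "Fh k l h G H v = (\<Sum>p\<in>?P. G (sel id k v) * H (sel (rho k (fst p) (snd p)) l v))"
      by (simp add: Fh_def take_sel case_prod_unfold)
    also have "\<dots> = (\<Sum>q<card ?P. (\<lambda>_. G) q (sel ((\<lambda>_. id) q) k v) * (\<lambda>_. H) q (sel (?\<rho>s q) l v))"
      using sum.reindex_bij_betw[OF e, of "\<lambda>p. G (sel id k v) * H (sel (rho k (fst p) (snd p)) l v)"]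
      by (simp add: atLeast0LessThan)
    finally show "Fh k l h G H v = (\<Sum>q<card ?P. (\<lambda>_. G) q (sel ((\<lambda>_. id) q) k v) * (\<lambda>_. H) q (sel (?\<rho>s q) l v))" .
  qed
  show ?thesis unfolding cls_def
    by (rule exI[where x="card ?P"], rule exI[where x="\<lambda>_. G"], rule exI[where x="\<lambda>_. id"],
        rule exI[where x="\<lambda>_. H"], rule exI[where x="?\<rho>s"]) (use c1 c2 in blast)
qed

definition Match :: "nat \<Rightarrow> nat \<Rightarrow> nat set \<Rightarrow> (nat \<Rightarrow> nat) \<Rightarrow> ('a list \<times> 'a list) set" where
  "Match k l J i = {(xs,ys). length xs = k \<and> length ys = l \<and> (\<forall>j\<in>J. ys!j = xs!(i j))}"

lemma cd_R:
  assumes J: "J \<in> Jset l h" and i: "i \<in> Iset k J" and hl: "h \<le> l" and z: "z \<in> tuples (k + l - h)"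
  shows "concat_del (take k z) (sel (rho k J i) l z) J = z"
proof -
  have Jl: "J \<subseteq> {..<l}" and cJ: "card J = h" using J by (auto simp: Jset_def)
  have lfl: "length (fl J l) = l - h" using length_fl[OF Jl] cJ by simp
  have lz: "length z = k + l - h" using z by (simp add: tuples_def)
  have "map (\<lambda>j. sel (rho k J i) l z ! j) (fl J l) = map (\<lambda>j. z ! (k + pos J j)) (fl J l)"
    by (rule map_cong[OF refl]) (auto simp: set_fl rho_def)
  also have "\<dots> = map (\<lambda>q. z ! (k + q)) (map (pos J) (fl J l))" by simp
  also have "\<dots> = drop k z" unfolding map_pos_fl
    by (rule nth_equalityI) (use lz lfl hl in auto)
  finally show ?thesis by (simp add: concat_del_alt)
qed

lemma R_bij:
  assumes J: "J \<in> Jset l h" and i: "i \<in> Iset k J" and hl: "h \<le> l"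
  shows "bij_betw (\<lambda>z. (take k z, sel (rho k J i) l z)) (tuples (k + l - h)) (Match k l J i)"
proof -
  have Jl: "J \<subseteq> {..<l}" and cJ: "card J = h" using J by (auto simp: Jset_def)
  have pe: "i \<in> J \<rightarrow>\<^sub>E {..<k}" using i by (auto simp: Iset_def)
  have lfl: "length (fl J l) = l - h" using length_fl[OF Jl] cJ by simp
  have inv1: "concat_del (take k z) (sel (rho k J i) l z) J = z" if z: "z \<in> tuples (k + l - h)" for z
    by (rule cd_R[OF J i hl z])
  have inv2: "(take k (concat_del xs ys J), sel (rho k J i) l (concat_del xs ys J)) = (xs, ys)"
    if p: "(xs, ys) \<in> Match k l J i" for xs ys
  proof -
    have lx: "length xs = k" and ly: "length ys = l" and mt: "\<forall>j\<in>J. ys!j = xs!(i j)"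
      using p by (auto simp: Match_def)
    have "sel (rho k J i) l (concat_del xs ys J) = ys"
    proof (rule nth_equalityI)
      fix j assume "j < length (sel (rho k J i) l (concat_del xs ys J))"
      then have j: "j < l" by simp
      show "sel (rho k J i) l (concat_del xs ys J) ! j = ys ! j"
      proof (cases "j \<in> J")
        case True
        then have "i j < k" using PiE_mem[OF pe True] by simp
        then show ?thesis using True j mt lx by (simp add: rho_def concat_del_alt nth_append)
      next
        case False
        have fp: "pos J j < length (fl J l) \<and> fl J l ! pos J j = j" by (rule fl_nth_pos[OF j False])
        then show ?thesis using False j lx ly by (simp add: rho_def concat_del_alt nth_append)
      qed
    qed (use ly in simp)
    then show ?thesis using lx by (simp add: concat_del_alt)
  qed
  show ?thesis
  proof (rule bij_betw_byWitness[where f' = "\<lambda>(xs,ys). concat_del xs ys J"])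
    show "\<forall>a\<in>tuples (k + l - h). (\<lambda>(xs, ys). concat_del xs ys J) (take k a, sel (rho k J i) l a) = a"
      using inv1 by auto
    show "\<forall>a'\<in>Match k l J i. (\<lambda>z. (take k z, sel (rho k J i) l z)) ((\<lambda>(xs, ys). concat_del xs ys J) a') = a'"
      using inv2 by auto
    show "(\<lambda>z. (take k z, sel (rho k J i) l z)) ` tuples (k + l - h) \<subseteq> Match k l J i"
    proof
      fix p assume "p \<in> (\<lambda>z. (take k z, sel (rho k J i) l z)) ` tuples (k + l - h)"
      then obtain z where pz: "p = (take k z, sel (rho k J i) l z)" and z: "z \<in> tuples (k + l - h)" by auto
      then have lz: "length z = k + l - h" by (simp add: tuples_def)
      have "\<forall>j\<in>J. sel (rho k J i) l z ! j = take k z ! i j"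
      proof
        fix j assume j: "j \<in> J"
        then have "j < l" "i j < k" using Jl PiE_mem[OF pe j] by auto
        then show "sel (rho k J i) l z ! j = take k z ! i j" using j by (simp add: rho_def)
      qed
      then show "p \<in> Match k l J i"
        using lz hl pz by (simp add: Match_def)
    qed
    show "(\<lambda>(xs, ys). concat_del xs ys J) ` Match k l J i \<subseteq> tuples (k + l - h)"
      using lfl hl by (auto simp: Match_def tuples_def concat_del_alt)
  qed
qed

lemma scale_take: "scale N (take k z) = take k (scale N z)"
  by (simp add: scale_def take_map)

lemma scale_sel: "(\<And>p. p < l \<Longrightarrow> \<rho> p < length z) \<Longrightarrow> scale N (sel \<rho> l z) = sel \<rho> l (scale N z)"
  by (rule nth_equalityI) (auto simp: scale_def)

lemma stepB:
  fixes G H :: "(real^'d) list \<Rightarrow> real" and \<eta> :: "int^'d \<Rightarrow> nat"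
  assumes G: "schwartz k G" and H: "schwartz l H" and hl: "h \<le> l"
    and J: "J \<in> Jset l h" and i: "i \<in> Iset k J" and pg: "poly_growth \<eta>" and N: "1 \<le> N"
  defines "g \<equiv> \<lambda>(xs,ys). G (scale N xs) * H (scale N ys) *
      (falling \<eta> (concat_del xs ys J) * (if \<forall>j\<in>J. ys!j = xs!(i j) then 1 else 0))"
  shows "g summable_on (tuples k \<times> tuples l)
    \<and> (\<lambda>z. G (take k (scale N z)) * H (sel (rho k J i) l (scale N z)) * falling \<eta> z) summable_on tuples (k+l-h)
    \<and> infsum g (tuples k \<times> tuples l)
      = infsum (\<lambda>z. G (take k (scale N z)) * H (sel (rho k J i) l (scale N z)) * falling \<eta> z) (tuples (k+l-h))"
proof -
  let ?n = "k + l - h"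
  let ?\<rho> = "rho k J i"
  define \<Phi> where "\<Phi> v = G (take k v) * H (sel ?\<rho> l v)" for v :: "(real^'d) list"
  have gd: "good k l ?n id ?\<rho>" by (rule good_rho[OF J i hl])
  have c1: "\<forall>q<(1::nat). schwartz k ((\<lambda>_. G) q) \<and> schwartz l ((\<lambda>_. H) q) \<and> good k l ?n ((\<lambda>_. id) q) ((\<lambda>_. ?\<rho>) q)"
    using G H gd by simp
  have c2: "\<forall>v\<in>tuples ?n. \<Phi> v = (\<Sum>q<(1::nat). (\<lambda>_. G) q (sel ((\<lambda>_. id) q) k v) * (\<lambda>_. H) q (sel ((\<lambda>_. ?\<rho>) q) l v))"
  proof
    fix v :: "(real^'d) list" assume "v \<in> tuples ?n"
    then have "k \<le> length v" using hl by (simp add: tuples_def)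
    then show "\<Phi> v = (\<Sum>q<(1::nat). (\<lambda>_. G) q (sel ((\<lambda>_. id) q) k v) * (\<lambda>_. H) q (sel ((\<lambda>_. ?\<rho>) q) l v))"
      by (simp add: \<Phi>_def take_sel)
  qed
  have "cls k l ?n \<Phi>" unfolding cls_def
    by (rule exI[where x=1], rule exI[where x="\<lambda>_. G"], rule exI[where x="\<lambda>_. id"],
        rule exI[where x="\<lambda>_. H"], rule exI[where x="\<lambda>_. ?\<rho>"]) (use c1 c2 in blast)
  then have sP: "(\<lambda>z. \<Phi> (scale N z) * falling \<eta> z) summable_on tuples ?n"
    by (intro summable_main cls_schwartz pg N)
  have bij: "bij_betw (\<lambda>z. (take k z, sel ?\<rho> l z)) (tuples ?n) (Match k l J i)" by (rule R_bij[OF J i hl])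
  have gR: "g (take k z, sel ?\<rho> l z) = \<Phi> (scale N z) * falling \<eta> z" if z: "z \<in> tuples ?n" for z
  proof -
    have lz: "length z = ?n" using z by (simp add: tuples_def)
    have "(take k z, sel ?\<rho> l z) \<in> Match k l J i" using bij z by (auto simp: bij_betw_def)
    then have ind: "\<forall>j\<in>J. sel ?\<rho> l z ! j = take k z ! i j" by (simp add: Match_def)
    have rr: "\<And>p. p < l \<Longrightarrow> ?\<rho> p < length z" using gd lz by (auto simp: good_def)
    show ?thesis using ind cd_R[OF J i hl z]
      by (simp add: g_def \<Phi>_def scale_take scale_sel[OF rr])
  qed
  have M_sub: "Match k l J i \<subseteq> tuples k \<times> tuples l" by (auto simp: Match_def tuples_def)
  have g0: "g p = 0" if "p \<in> tuples k \<times> tuples l - Match k l J i" for p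
    using that by (auto simp: g_def Match_def tuples_def split: if_splits)
  have "g summable_on Match k l J i"
  proof -
    have "(\<lambda>z. g (take k z, sel ?\<rho> l z)) summable_on tuples ?n"
      using sP by (rule summable_on_cong[THEN iffD1, rotated]) (simp add: gR)
    then show ?thesis using summable_on_reindex_bij_betw[OF bij] by blast
  qed
  then have s1: "g summable_on (tuples k \<times> tuples l)"
    by (rule summable_on_cong_neutral[THEN iffD1, rotated -1]) (use M_sub g0 in auto)
  have "infsum g (tuples k \<times> tuples l) = infsum g (Match k l J i)"
    by (rule infsum_cong_neutral) (use M_sub g0 in auto)
  also have "\<dots> = infsum (\<lambda>z. g (take k z, sel ?\<rho> l z)) (tuples ?n)"
    by (rule infsum_reindex_bij_betw[OF bij, symmetric])
  also have "\<dots> = infsum (\<lambda>z. \<Phi> (scale N z) * falling \<eta> z) (tuples ?n)"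
    by (rule infsum_cong) (simp add: gR)
  finally show ?thesis using s1 sP by (simp add: \<Phi>_def)
qed

lemma infsum_sum_fin:
  fixes f :: "'b \<Rightarrow> 'a \<Rightarrow> real"
  assumes "finite A" "\<And>a. a \<in> A \<Longrightarrow> f a summable_on B"
  shows "(\<lambda>x. \<Sum>a\<in>A. f a x) summable_on B \<and> infsum (\<lambda>x. \<Sum>a\<in>A. f a x) B = (\<Sum>a\<in>A. infsum (f a) B)"
  using assms
proof (induction A rule: finite_induct)
  case empty then show ?case by simp
next
  case (insert a A)
  then have s: "(\<lambda>x. \<Sum>a\<in>A. f a x) summable_on B" and e: "infsum (\<lambda>x. \<Sum>a\<in>A. f a x) B = (\<Sum>a\<in>A. infsum (f a) B)"
    and fa: "f a summable_on B" by auto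
  show ?case using insert(1,2) summable_on_add[OF fa s] infsum_add[OF fa s] e by simp
qed

lemma prod_ind: "finite J \<Longrightarrow> (\<Prod>j\<in>J. if P j then 1 else 0 :: real) = (if \<forall>j\<in>J. P j then 1 else 0)"
  by (induction J rule: finite_induct) auto

lemma brace_Sigma:
  assumes "length xs = k" "length ys = l"
  shows "brace \<eta> h xs ys = (\<Sum>(J,i)\<in>Sigma (Jset l h) (Iset k).
      falling \<eta> (concat_del xs ys J) * (if \<forall>j\<in>J. ys!j = xs!(i j) then 1 else 0))"
proof -
  have "brace \<eta> h xs ys = (\<Sum>J\<in>Jset l h. \<Sum>i\<in>Iset k J.
      falling \<eta> (concat_del xs ys J) * (if \<forall>j\<in>J. ys!j = xs!(i j) then 1 else 0))"
    unfolding brace_def assms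
  proof (rule sum.cong)
    show "{J. J \<subseteq> {..<l} \<and> card J = h} = Jset l h" by (simp add: Jset_def)
  next
    fix J assume "J \<in> Jset l h"
    then have fJ: "finite J" by (auto simp: Jset_def intro: finite_subset)
    show "falling \<eta> (concat_del xs ys J) * (\<Sum>i\<in>{i \<in> J \<rightarrow>\<^sub>E {..<k}. inj_on i J}. \<Prod>j\<in>J. if ys ! j = xs ! i j then 1 else 0)
      = (\<Sum>i\<in>Iset k J. falling \<eta> (concat_del xs ys J) * (if \<forall>j\<in>J. ys!j = xs!(i j) then 1 else 0))"
      by (simp add: Iset_def prod_ind[OF fJ] sum_distrib_left)
  qed
  also have "\<dots> = (\<Sum>(J,i)\<in>Sigma (Jset l h) (Iset k).
      falling \<eta> (concat_del xs ys J) * (if \<forall>j\<in>J. ys!j = xs!(i j) then 1 else 0))"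
    by (rule sum.Sigma) (auto simp: finite_Jset finite_Iset_J)
  finally show ?thesis .
qed

lemma brace_total:
  "(\<Sum>h\<le>length ys. brace \<eta> h xs ys) = falling \<eta> xs * falling \<eta> ys"
proof -
  let ?l = "length ys"
  let ?t = "\<lambda>J. falling \<eta> (concat_del xs ys J) * real (card (Mt xs ys J))"
  have b: "brace \<eta> h xs ys = (\<Sum>J\<in>{J \<in> Pow {..<?l}. card J = h}. ?t J)" for h
    unfolding brace_def
  proof (rule sum.cong)
    show "{J. J \<subseteq> {..<?l} \<and> card J = h} = {J \<in> Pow {..<?l}. card J = h}" by auto
  next
    fix J assume "J \<in> {J \<in> Pow {..<?l}. card J = h}"
    then have fJ: "finite J" by (auto intro: finite_subset)
    have "(\<Sum>i\<in>{i \<in> J \<rightarrow>\<^sub>E {..<length xs}. inj_on i J}. \<Prod>j\<in>J. if ys ! j = xs ! i j then 1 else 0)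
        = (\<Sum>i\<in>{i \<in> J \<rightarrow>\<^sub>E {..<length xs}. inj_on i J}. if \<forall>j\<in>J. ys ! j = xs ! i j then 1 else (0::real))"
      by (simp add: prod_ind fJ)
    also have "\<dots> = (\<Sum>i\<in>Mt xs ys J. 1)"
      using finite_subset[OF _ finite_PiE[OF fJ], of "{i \<in> J \<rightarrow>\<^sub>E {..<length xs}. inj_on i J}" "\<lambda>_. {..<length xs}"]
      unfolding Mt_def by (subst sum.inter_filter[symmetric]) (auto intro: finite_subset[OF _ finite_PiE[OF fJ]] intro!: sum.cong)
    finally show "falling \<eta> (concat_del xs ys J) * (\<Sum>i\<in>{i \<in> J \<rightarrow>\<^sub>E {..<length xs}. inj_on i J}. \<Prod>j\<in>J. if ys ! j = xs ! i j then 1 else 0) = ?t J"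
      by simp
  qed
  have "(\<Sum>h\<le>?l. brace \<eta> h xs ys) = (\<Sum>h\<in>{..?l}. \<Sum>J\<in>{J \<in> Pow {..<?l}. card J = h}. ?t J)"
    by (simp add: b)
  also have "\<dots> = (\<Sum>J\<in>Pow {..<?l}. ?t J)"
    by (rule sum.group) (auto intro: card_mono[of "{..<?l}", simplified])
  also have "\<dots> = falling \<eta> xs * falling \<eta> ys" by (rule main_identity)
  finally show ?thesis .
qed

lemma part2_core:
  fixes G H :: "(real^'d) list \<Rightarrow> real" and \<eta> :: "int^'d \<Rightarrow> nat"
  assumes G: "schwartz k G" and H: "schwartz l H" and hl: "h \<le> l"
    and pg: "poly_growth \<eta>" and N: "1 \<le> N"
  shows "(\<lambda>(xs,ys). G (scale N xs) * H (scale N ys) * brace \<eta> h xs ys) summable_on (tuples k \<times> tuples l)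
    \<and> infsum (\<lambda>xs. infsum (\<lambda>ys. G (scale N xs) * H (scale N ys) * brace \<eta> h xs ys) (tuples l)) (tuples k)
      = infsum (\<lambda>z. Fh k l h G H (scale N z) * falling \<eta> z) (tuples (k + l - h))"
proof -
  let ?P = "Sigma (Jset l h) (Iset k)"
  let ?n = "k + l - h"
  have fP: "finite ?P" by (rule finite_P)
  define gg where "gg a = (\<lambda>(xs,ys). G (scale N xs) * H (scale N ys) *
      (falling \<eta> (concat_del xs ys (fst a)) * (if \<forall>j\<in>fst a. ys!j = xs!(snd a j) then 1 else 0)))" for a
  define ph where "ph a = (\<lambda>z. G (take k (scale N z)) * H (sel (rho k (fst a) (snd a)) l (scale N z)) * falling \<eta> z)" for a
  have B: "gg a summable_on (tuples k \<times> tuples l) \<and> ph a summable_on tuples ?n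
      \<and> infsum (gg a) (tuples k \<times> tuples l) = infsum (ph a) (tuples ?n)" if a: "a \<in> ?P" for a
  proof -
    obtain J i where a': "a = (J,i)" "J \<in> Jset l h" "i \<in> Iset k J" using a by auto
    show ?thesis using stepB[OF G H hl a'(2,3) pg N] unfolding gg_def ph_def a'(1) by simp
  qed
  define f where "f = (\<lambda>(xs,ys). G (scale N xs) * H (scale N ys) * brace \<eta> h xs ys)"
  have feq: "f p = (\<Sum>a\<in>?P. gg a p)" if p: "p \<in> tuples k \<times> tuples l" for p
  proof -
    obtain xs ys where p': "p = (xs,ys)" "length xs = k" "length ys = l" using p by (auto simp: tuples_def)
    show ?thesis by (simp add: f_def gg_def p'(1) brace_Sigma[OF p'(2,3)] sum_distrib_left case_prod_unfold)
  qed
  have S1: "(\<lambda>p. \<Sum>a\<in>?P. gg a p) summable_on (tuples k \<times> tuples l) \<and>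
      infsum (\<lambda>p. \<Sum>a\<in>?P. gg a p) (tuples k \<times> tuples l) = (\<Sum>a\<in>?P. infsum (gg a) (tuples k \<times> tuples l))"
    by (rule infsum_sum_fin[OF fP]) (use B in blast)
  have S2: "(\<lambda>z. \<Sum>a\<in>?P. ph a z) summable_on tuples ?n \<and>
      infsum (\<lambda>z. \<Sum>a\<in>?P. ph a z) (tuples ?n) = (\<Sum>a\<in>?P. infsum (ph a) (tuples ?n))"
    by (rule infsum_sum_fin[OF fP]) (use B in blast)
  have fs: "f summable_on (tuples k \<times> tuples l)"
    using conjunct1[OF S1] by (rule summable_on_cong[THEN iffD1, rotated]) (simp add: feq)
  have "infsum (\<lambda>xs. infsum (\<lambda>ys. G (scale N xs) * H (scale N ys) * brace \<eta> h xs ys) (tuples l)) (tuples k)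
      = infsum f (tuples k \<times> tuples l)"
    using infsum_Sigma'_banach[of "\<lambda>xs ys. G (scale N xs) * H (scale N ys) * brace \<eta> h xs ys" "tuples k" "\<lambda>_. tuples l"] fs
    by (simp add: f_def)
  also have "\<dots> = infsum (\<lambda>p. \<Sum>a\<in>?P. gg a p) (tuples k \<times> tuples l)"
    by (rule infsum_cong) (simp add: feq)
  also have "\<dots> = (\<Sum>a\<in>?P. infsum (ph a) (tuples ?n))" using S1 B by (simp cong: sum.cong)
  also have "\<dots> = infsum (\<lambda>z. \<Sum>a\<in>?P. ph a z) (tuples ?n)" using S2 by simp
  also have "\<dots> = infsum (\<lambda>z. Fh k l h G H (scale N z) * falling \<eta> z) (tuples ?n)"
    by (rule infsum_cong) (simp add: ph_def Fh_def sum_distrib_right case_prod_unfold)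
  finally show ?thesis using fs by (simp add: f_def)
qed

theorem lemma2p1:
  fixes k l :: nat
    and G H :: "(real^'d) list \<Rightarrow> real"
  assumes "l \<le> k"
    and "schwartz k G" and "schwartz l H"
  shows "(\<forall>(\<eta>::int^'d \<Rightarrow> nat) N. poly_growth \<eta> \<longrightarrow> 1 \<le> N \<longrightarrow>
            pairing k G \<eta> N * pairing l H \<eta> N = (\<Sum>h\<le>l. summand k l G H \<eta> N h))
       \<and> (\<forall>h\<le>l. \<exists>F. schwartz (k + l - h) F \<and>
            (\<forall>(\<eta>::int^'d \<Rightarrow> nat) N. poly_growth \<eta> \<longrightarrow> 1 \<le> N \<longrightarrow>
               summand k l G H \<eta> N h
                 = (1 / real N ^ (h * CARD('d))) * pairing (k + l - h) F \<eta> N))"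
proof (intro conjI allI impI)
  fix \<eta> :: "int^'d \<Rightarrow> nat" and N :: nat
  assume pg: "poly_growth \<eta>" and N: "1 \<le> N"
  define f where "f h xs ys = G (scale N xs) * H (scale N ys) * brace \<eta> h xs ys" for h xs ys
  define I where "I h = infsum (\<lambda>xs. infsum (f h xs) (tuples l)) (tuples k)" for h
  have core: "(\<lambda>(xs,ys). f h xs ys) summable_on (tuples k \<times> tuples l)" if "h \<le> l" for h
    using part2_core[OF assms(2,3) that pg N] by (simp add: f_def)
  have s_in: "f h xs summable_on tuples l" if "h \<le> l" "xs \<in> tuples k" for h xs
    using summable_on_SigmaD1[OF core[OF that(1)] that(2)] .
  have s_out: "(\<lambda>xs. infsum (f h xs) (tuples l)) summable_on tuples k" if "h \<le> l" for h
    using summable_on_Sigma_banach[OF core[OF that]] .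
  have "infsum (\<lambda>xs. G (scale N xs) * falling \<eta> xs) (tuples k) * infsum (\<lambda>ys. H (scale N ys) * falling \<eta> ys) (tuples l)
      = infsum (\<lambda>xs. G (scale N xs) * falling \<eta> xs * infsum (\<lambda>ys. H (scale N ys) * falling \<eta> ys) (tuples l)) (tuples k)"
    by (rule infsum_cmult_left'[symmetric])
  also have "\<dots> = infsum (\<lambda>xs. infsum (\<lambda>ys. \<Sum>h\<le>l. f h xs ys) (tuples l)) (tuples k)"
  proof (rule infsum_cong)
    fix xs :: "(int^'d) list" assume xs: "xs \<in> tuples k"
    have "G (scale N xs) * falling \<eta> xs * infsum (\<lambda>ys. H (scale N ys) * falling \<eta> ys) (tuples l)
        = infsum (\<lambda>ys. G (scale N xs) * falling \<eta> xs * (H (scale N ys) * falling \<eta> ys)) (tuples l)"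
      by (rule infsum_cmult_right'[symmetric])
    also have "\<dots> = infsum (\<lambda>ys. \<Sum>h\<le>l. f h xs ys) (tuples l)"
    proof (rule infsum_cong)
      fix ys :: "(int^'d) list" assume ys: "ys \<in> tuples l"
      then have "length ys = l" by (simp add: tuples_def)
      then have ly: "length ys = l" .
      have "G (scale N xs) * falling \<eta> xs * (H (scale N ys) * falling \<eta> ys)
          = G (scale N xs) * H (scale N ys) * (falling \<eta> xs * falling \<eta> ys)" by (simp only: mult_ac)
      also have "\<dots> = G (scale N xs) * H (scale N ys) * (\<Sum>h\<le>l. brace \<eta> h xs ys)"
        using brace_total[of \<eta> xs ys] ly by simp
      also have "\<dots> = (\<Sum>h\<le>l. f h xs ys)" by (simp add: f_def sum_distrib_left)
      finally show "G (scale N xs) * falling \<eta> xs * (H (scale N ys) * falling \<eta> ys) = (\<Sum>h\<le>l. f h xs ys)" .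
    qed
    finally show "G (scale N xs) * falling \<eta> xs * infsum (\<lambda>ys. H (scale N ys) * falling \<eta> ys) (tuples l)
        = infsum (\<lambda>ys. \<Sum>h\<le>l. f h xs ys) (tuples l)" .
  qed
  also have "\<dots> = infsum (\<lambda>xs. \<Sum>h\<le>l. infsum (f h xs) (tuples l)) (tuples k)"
  proof (rule infsum_cong)
    fix xs :: "(int^'d) list" assume xs: "xs \<in> tuples k"
    show "infsum (\<lambda>ys. \<Sum>h\<le>l. f h xs ys) (tuples l) = (\<Sum>h\<le>l. infsum (f h xs) (tuples l))"
      using infsum_sum_fin[of "{..l}" "\<lambda>h. f h xs" "tuples l"] s_in xs by simp
  qed
  also have "\<dots> = (\<Sum>h\<le>l. I h)"
    using infsum_sum_fin[of "{..l}" "\<lambda>h xs. infsum (f h xs) (tuples l)" "tuples k"] s_out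
    by (simp add: I_def)
  finally have prod: "infsum (\<lambda>xs. G (scale N xs) * falling \<eta> xs) (tuples k) * infsum (\<lambda>ys. H (scale N ys) * falling \<eta> ys) (tuples l)
      = (\<Sum>h\<le>l. I h)" .
  have c: "1 / real N ^ (k * CARD('d)) * (1 / real N ^ (l * CARD('d))) = 1 / real N ^ ((k + l) * CARD('d))"
    by (simp add: add_mult_distrib power_add)
  have "pairing k G \<eta> N * pairing l H \<eta> N
     = (1 / real N ^ (k * CARD('d)) * (1 / real N ^ (l * CARD('d)))) *
       (infsum (\<lambda>xs. G (scale N xs) * falling \<eta> xs) (tuples k) * infsum (\<lambda>ys. H (scale N ys) * falling \<eta> ys) (tuples l))"
    unfolding pairing_def by (simp only: mult_ac)
  also have "\<dots> = 1 / real N ^ ((k + l) * CARD('d)) * (\<Sum>h\<le>l. I h)" by (simp only: c prod)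
  also have "\<dots> = (\<Sum>h\<le>l. summand k l G H \<eta> N h)"
    by (simp add: summand_def I_def f_def[abs_def] sum_distrib_left)
  finally show "pairing k G \<eta> N * pairing l H \<eta> N = (\<Sum>h\<le>l. summand k l G H \<eta> N h)" .
next
  fix h assume hl: "h \<le> l"
  show "\<exists>F. schwartz (k + l - h) F \<and>
            (\<forall>(\<eta>::int^'d \<Rightarrow> nat) N. poly_growth \<eta> \<longrightarrow> 1 \<le> N \<longrightarrow>
               summand k l G H \<eta> N h
                 = (1 / real N ^ (h * CARD('d))) * pairing (k + l - h) F \<eta> N)"
  proof (intro exI conjI allI impI)
    show "schwartz (k + l - h) (Fh k l h G H)" by (rule cls_schwartz[OF cls_Fh[OF assms(2,3) hl]])
  next
    fix \<eta> :: "int^'d \<Rightarrow> nat" and N :: nat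
    assume pg: "poly_growth \<eta>" and N: "1 \<le> N"
    have e: "(k + l) * CARD('d) = h * CARD('d) + (k + l - h) * CARD('d)"
      using hl by (simp add: add_mult_distrib[symmetric])
    have c: "1 / real N ^ ((k + l) * CARD('d)) = 1 / real N ^ (h * CARD('d)) * (1 / real N ^ ((k + l - h) * CARD('d)))"
      unfolding e by (simp add: power_add)
    show "summand k l G H \<eta> N h = (1 / real N ^ (h * CARD('d))) * pairing (k + l - h) (Fh k l h G H) \<eta> N"
      unfolding summand_def pairing_def c using conjunct2[OF part2_core[OF assms(2,3) hl pg N]]
      by simp
  qed
qed


end
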